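(* Let $\Sigma$ be a nonsingular fan in $\mathbb R^d$. Then the following are equivalent: (a) $\Sigma$ is pairwise convex; (b) for any two adjacent maximal cones $\sigma,\tau\in\Sigma_d$, the union $\sigma_{\le1}\cup\tau_{\le1}$ is convex. If moreover $\Sigma$ is finite and complete, these are also equivalent to: (c) $\Sigma$ is pairwise positive and $\mathcal P(\Sigma)$ is convex.
   Context: A fan is nonsingular if every maximal cone is generated by a $\mathbb Z$-basis of $\mathbb Z^d$; $\Sigma_d$ is the set of $d$-dimensional cones. Two maximal cones are adjacent if they share a face of dimension $d-1$; then one can write $\sigma=\operatorname{cone}\{v_1,\ldots,v_{d-1},v_d\}$, $\tau=\operatorname{cone}\{v_1,\ldots,v_{d-1},v'_d\}$ with both generating sets $\mathbb Z$-bases. $\Sigma$ is pairwise positive if always $v_d+v'_d\in\operatorname{cone}\{v_1,\ldots,v_{d-1}\}$, and pairwise convex if always $v_d+v'_d$ equals $0$, or $v_i$ for some $1\le i\le d-1$, or $v_i+v_j$ for some $1\le i,j\le d-1$. For $\sigma\in\Sigma_d$ generated by a basis $v_1,\dots,v_d$, $\sigma_{\le1}=\operatorname{conv}\{0,v_1,\ldots,v_d\}$, and $\mathcal P(\Sigma)=\bigcup_{\sigma\in\Sigma_d}\sigma_{\le1}$. $\Sigma$ is complete if the union of its cones is $\mathbb R^d$. *)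

theory Defs
  imports "HOL-Analysis.Analysis"
begin

definition lattice_vec :: "real^'n \<Rightarrow> bool" where
  "lattice_vec v \<longleftrightarrow> (\<forall>i. v $ i \<in> \<int>)"

definition cone_gen :: "(real^'n) set \<Rightarrow> (real^'n) set" where
  "cone_gen V = {x. \<exists>c. (\<forall>v\<in>V. c v \<ge> 0) \<and> x = (\<Sum>v\<in>V. c v *\<^sub>R v)}"

definition int_span :: "(real^'n) set \<Rightarrow> (real^'n) set" where
  "int_span V = {x. \<exists>c. (\<forall>v\<in>V. c v \<in> \<int>) \<and> x = (\<Sum>v\<in>V. c v *\<^sub>R v)}"

definition Zbasis :: "(real^'n) set \<Rightarrow> bool" where
  "Zbasis B \<longleftrightarrow> finite B \<and> card B = CARD('n) \<and> (\<forall>b\<in>B. lattice_vec b) \<and>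
     independent B \<and> int_span B = {x. lattice_vec x}"

definition fan :: "(real^'n) set set \<Rightarrow> bool" where
  "fan \<Sigma> \<longleftrightarrow>
     (\<forall>\<sigma>\<in>\<Sigma>. \<exists>V. finite V \<and> (\<forall>v\<in>V. lattice_vec v) \<and> \<sigma> = cone_gen V) \<and>
     (\<forall>\<sigma>\<in>\<Sigma>. \<sigma> \<inter> uminus ` \<sigma> = {0}) \<and>
     (\<forall>\<sigma>\<in>\<Sigma>. \<forall>\<tau>. \<tau> face_of \<sigma> \<and> \<tau> \<noteq> {} \<longrightarrow> \<tau> \<in> \<Sigma>) \<and>
     (\<forall>\<sigma>\<in>\<Sigma>. \<forall>\<tau>\<in>\<Sigma>. (\<sigma> \<inter> \<tau>) face_of \<sigma> \<and> (\<sigma> \<inter> \<tau>) face_of \<tau>)"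

definition maximal_cone :: "(real^'n) set set \<Rightarrow> (real^'n) set \<Rightarrow> bool" where
  "maximal_cone \<Sigma> \<sigma> \<longleftrightarrow> \<sigma> \<in> \<Sigma> \<and> \<not> (\<exists>\<tau>\<in>\<Sigma>. \<sigma> \<subset> \<tau>)"

definition top_cones :: "(real^'n) set set \<Rightarrow> (real^'n) set set" where
  "top_cones \<Sigma> = {\<sigma>\<in>\<Sigma>. dim \<sigma> = CARD('n)}"

definition nonsingular :: "(real^'n) set set \<Rightarrow> bool" where
  "nonsingular \<Sigma> \<longleftrightarrow> (\<forall>\<sigma>. maximal_cone \<Sigma> \<sigma> \<longrightarrow> (\<exists>B. Zbasis B \<and> \<sigma> = cone_gen B))"

definition adjacent :: "(real^'n) set set \<Rightarrow> (real^'n) set \<Rightarrow> (real^'n) set \<Rightarrow> bool" where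
  "adjacent \<Sigma> \<sigma> \<tau> \<longleftrightarrow> \<sigma> \<in> top_cones \<Sigma> \<and> \<tau> \<in> top_cones \<Sigma> \<and> \<sigma> \<noteq> \<tau> \<and>
     dim (\<sigma> \<inter> \<tau>) = CARD('n) - 1"

definition adjacent_pres ::
  "(real^'n) set set \<Rightarrow> (real^'n) set \<Rightarrow> (real^'n) set \<Rightarrow> (real^'n) set \<Rightarrow> real^'n \<Rightarrow> real^'n \<Rightarrow> bool" where
  "adjacent_pres \<Sigma> \<sigma> \<tau> W u u' \<longleftrightarrow> adjacent \<Sigma> \<sigma> \<tau> \<and> u \<notin> W \<and> u' \<notin> W \<and>
     Zbasis (insert u W) \<and> Zbasis (insert u' W) \<and>
     \<sigma> = cone_gen (insert u W) \<and> \<tau> = cone_gen (insert u' W)"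

definition pairwise_positive :: "(real^'n) set set \<Rightarrow> bool" where
  "pairwise_positive \<Sigma> \<longleftrightarrow>
     (\<forall>\<sigma> \<tau> W u u'. adjacent_pres \<Sigma> \<sigma> \<tau> W u u' \<longrightarrow> u + u' \<in> cone_gen W)"

definition pairwise_convex :: "(real^'n) set set \<Rightarrow> bool" where
  "pairwise_convex \<Sigma> \<longleftrightarrow>
     (\<forall>\<sigma> \<tau> W u u'. adjacent_pres \<Sigma> \<sigma> \<tau> W u u' \<longrightarrow>
        u + u' = 0 \<or> (\<exists>a\<in>W. u + u' = a) \<or> (\<exists>a\<in>W. \<exists>b\<in>W. u + u' = a + b))"

text \<open>sigma_{<=1} = conv{0, v_1, ..., v_d} for sigma generated by the Z-basis v_1..v_d.
  (The generating Z-basis of a cone is unique, so the union is over one set.)\<close>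
definition unit_part :: "(real^'n) set \<Rightarrow> (real^'n) set" where
  "unit_part \<sigma> = \<Union>{convex hull (insert 0 B) | B. Zbasis B \<and> \<sigma> = cone_gen B}"

definition fan_polytope :: "(real^'n) set set \<Rightarrow> (real^'n) set" where
  "fan_polytope \<Sigma> = (\<Union>\<sigma>\<in>top_cones \<Sigma>. unit_part \<sigma>)"

definition complete_fan :: "(real^'n) set set \<Rightarrow> bool" where
  "complete_fan \<Sigma> \<longleftrightarrow> \<Union>\<Sigma> = UNIV"

end

theory Submission
  imports Defs
begin

definition ell :: "(real^'n) set \<Rightarrow> real^'n \<Rightarrow> real" where
  "ell B x = (\<Sum>b\<in>B. representation B x b)"

definition bas :: "(real^'n) set \<Rightarrow> bool" where
  "bas B \<longleftrightarrow> finite B \<and> independent B \<and> span B = UNIV"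

lemma Zbasis_bas:
  assumes "Zbasis (B::(real^'n) set)"
  shows "bas B" "card B = CARD('n)" "0 \<notin> B" "\<And>b. b\<in>B \<Longrightarrow> lattice_vec b"
    "int_span B = {x. lattice_vec x}"
proof -
  have f: "finite B" and i: "independent B" and c: "card B = CARD('n)"
    using assms by (auto simp: Zbasis_def)
  have "UNIV \<subseteq> span B" using card_ge_dim_independent[of B UNIV] i c by (simp add: dim_UNIV)
  then show "bas B" using f i by (auto simp: bas_def)
  show "card B = CARD('n)" by fact
  show "0 \<notin> B" using i dependent_zero by blast
  show "\<And>b. b\<in>B \<Longrightarrow> lattice_vec b" using assms by (auto simp: Zbasis_def)
  show "int_span B = {x. lattice_vec x}" using assms by (auto simp: Zbasis_def)
qed

lemma rep_sum:
  assumes "bas B" shows "(\<Sum>b\<in>B. representation B x b *\<^sub>R b) = x"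
  using assms by (intro sum_representation_eq) (auto simp: bas_def)

lemma rep_of_sum_gen:
  assumes "bas B" "S \<subseteq> B" "b \<in> B"
  shows "representation B (\<Sum>v\<in>S. c v *\<^sub>R v) b = (if b \<in> S then c b else 0)"
proof -
  have f: "finite B" and i: "independent B" using assms by (auto simp: bas_def)
  have fS: "finite S" using f assms(2) finite_subset by blast
  have "representation B (\<Sum>v\<in>S. c v *\<^sub>R v) = (\<lambda>v. if v \<in> S then c v else 0)"
  proof (rule representation_eqI[OF i])
    show "(\<Sum>v\<in>S. c v *\<^sub>R v) \<in> span B" using assms by (auto simp: bas_def)
    show "(if b \<in> S then c b else 0) \<noteq> 0 \<Longrightarrow> b \<in> B" for b using assms(2) by (auto split: if_splits)
    show "finite {b. (if b \<in> S then c b else 0) \<noteq> 0}"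
      by (rule finite_subset[OF _ fS]) (auto split: if_splits)
    show "(\<Sum>b | (if b \<in> S then c b else 0) \<noteq> 0. (if b \<in> S then c b else 0) *\<^sub>R b) = (\<Sum>v\<in>S. c v *\<^sub>R v)"
      by (rule sum.mono_neutral_cong_left[OF fS]) (auto split: if_splits)
  qed
  then show ?thesis by simp
qed

lemma rep_of_sum:
  assumes "bas B" "b \<in> B"
  shows "representation B (\<Sum>v\<in>B. c v *\<^sub>R v) b = c b"
  using rep_of_sum_gen[OF assms(1) order_refl assms(2), of c] assms(2) by simp

lemma rep_basis:
  assumes "bas B" "b \<in> B" "v \<in> B"
  shows "representation B v b = (if b = v then 1 else 0)"
  using representation_basis[of B v] assms by (auto simp: bas_def)

lemma rep_add: "bas B \<Longrightarrow> representation B (x + y) b = representation B x b + representation B y b"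
  by (subst representation_add) (auto simp: bas_def)
lemma rep_diff: "bas B \<Longrightarrow> representation B (x - y) b = representation B x b - representation B y b"
  by (subst representation_diff) (auto simp: bas_def)
lemma rep_neg: "bas B \<Longrightarrow> representation B (- x) b = - representation B x b"
  by (subst representation_neg) (auto simp: bas_def)
lemma rep_scale: "bas B \<Longrightarrow> representation B (r *\<^sub>R x) b = r * representation B x b"
  by (subst representation_scale) (auto simp: bas_def)
lemma rep_zero: "representation B 0 b = 0"
  by (simp add: representation_zero)
lemma rep_sumf: "bas B \<Longrightarrow> representation B (sum f I) b = (\<Sum>i\<in>I. representation B (f i) b)"
  by (subst representation_sum) (auto simp: bas_def)

lemma rep_linear: "bas B \<Longrightarrow> linear (\<lambda>x. representation B x b)"
  by (rule linearI) (simp_all add: rep_add rep_scale)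

lemma rep_continuous: "bas B \<Longrightarrow> continuous_on UNIV (\<lambda>x. representation B x b)"
  by (intro linear_continuous_on linear_conv_bounded_linear[THEN iffD1] rep_linear)

lemma ell_linear: "bas B \<Longrightarrow> linear (ell B)"
  unfolding ell_def by (rule linearI) (simp_all add: rep_add rep_scale sum.distrib sum_distrib_left)

lemma ell_add: "bas B \<Longrightarrow> ell B (x + y) = ell B x + ell B y"
  unfolding ell_def by (simp add: rep_add sum.distrib)
lemma ell_diff: "bas B \<Longrightarrow> ell B (x - y) = ell B x - ell B y"
  unfolding ell_def by (simp add: rep_diff sum_subtractf)
lemma ell_scale: "bas B \<Longrightarrow> ell B (r *\<^sub>R x) = r * ell B x"
  unfolding ell_def by (simp add: rep_scale sum_distrib_left)

lemma ell_continuous: "bas B \<Longrightarrow> continuous_on UNIV (ell B)"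
  by (intro linear_continuous_on linear_conv_bounded_linear[THEN iffD1] ell_linear)

lemma cone_gen_rep:
  assumes "bas B" "S \<subseteq> B"
  shows "cone_gen S = {x. (\<forall>b\<in>B. 0 \<le> representation B x b) \<and> (\<forall>b\<in>B-S. representation B x b = 0)}"
proof safe
  fix x assume "x \<in> cone_gen S"
  then obtain c where c: "\<forall>v\<in>S. c v \<ge> 0" "x = (\<Sum>v\<in>S. c v *\<^sub>R v)" by (auto simp: cone_gen_def)
  show "0 \<le> representation B x b" if "b \<in> B" for b
    using c rep_of_sum_gen[OF assms that, of c] by auto
  show "representation B x b = 0" if "b \<in> B" "b \<notin> S" for b
    using c rep_of_sum_gen[OF assms that(1), of c] that by auto
next
  fix x assume h: "\<forall>b\<in>B. 0 \<le> representation B x b" "\<forall>b\<in>B-S. representation B x b = 0"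
  have fB: "finite B" using assms by (auto simp: bas_def)
  have "x = (\<Sum>b\<in>B. representation B x b *\<^sub>R b)" using rep_sum[OF assms(1)] by simp
  also have "\<dots> = (\<Sum>b\<in>S. representation B x b *\<^sub>R b)"
    using h assms(2) by (intro sum.mono_neutral_cong_right[OF fB]) auto
  finally show "x \<in> cone_gen S" using h assms(2) by (auto simp: cone_gen_def)
qed

lemma hull_rep:
  assumes "bas B" "S \<subseteq> B"
  shows "convex hull (insert 0 S) = {x. (\<forall>b\<in>B. 0 \<le> representation B x b) \<and>
      (\<forall>b\<in>B-S. representation B x b = 0) \<and> ell B x \<le> 1}"
proof -
  have fB: "finite B" and iB: "independent B" using assms by (auto simp: bas_def)
  have fS: "finite S" using fB assms(2) finite_subset by blast
  have z: "0 \<notin> S" using iB assms(2) dependent_zero by blast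
  show ?thesis
  proof safe
    fix x assume "x \<in> convex hull (insert 0 S)"
    then obtain u where u: "\<forall>v\<in>insert 0 S. 0 \<le> u v" "sum u (insert 0 S) = 1"
       "(\<Sum>v\<in>insert 0 S. u v *\<^sub>R v) = x"
      by (auto simp: convex_hull_finite fS)
    have x: "x = (\<Sum>v\<in>S. u v *\<^sub>R v)" using u(3) fS z by simp
    have s: "u 0 + sum u S = 1" using u(2) fS z by simp
    show "0 \<le> representation B x b" if "b \<in> B" for b
      using u(1) rep_of_sum_gen[OF assms that, of u] x by auto
    show "representation B x b = 0" if "b \<in> B" "b \<notin> S" for b
      using rep_of_sum_gen[OF assms that(1), of u] x that by auto
    have "ell B x = (\<Sum>b\<in>B. if b \<in> S then u b else 0)"
      unfolding ell_def x using rep_of_sum_gen[OF assms, of _ u] by (intro sum.cong) auto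
    also have "\<dots> = sum u S" using assms(2) fB by (simp add: sum.If_cases Int_absorb1)
    finally show "ell B x \<le> 1" using s u(1) by auto
  next
    fix x assume h: "\<forall>b\<in>B. 0 \<le> representation B x b" "\<forall>b\<in>B-S. representation B x b = 0"
      "ell B x \<le> 1"
    define u where "u v = (if v = 0 then 1 - ell B x else representation B x v)" for v
    have xs: "x = (\<Sum>b\<in>S. representation B x b *\<^sub>R b)"
    proof -
      have "x = (\<Sum>b\<in>B. representation B x b *\<^sub>R b)" using rep_sum[OF assms(1)] by simp
      also have "\<dots> = (\<Sum>b\<in>S. representation B x b *\<^sub>R b)"
        using h assms(2) by (intro sum.mono_neutral_cong_right[OF fB]) auto
      finally show ?thesis .
    qed
    have es: "ell B x = (\<Sum>b\<in>S. representation B x b)"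
      unfolding ell_def using h assms(2) by (intro sum.mono_neutral_cong_right[OF fB]) auto
    have "\<forall>v\<in>insert 0 S. 0 \<le> u v" using h assms(2) z by (auto simp: u_def)
    moreover have "sum u (insert 0 S) = 1"
      using fS z by (simp add: u_def es) (smt (verit) sum.cong)
    moreover have "(\<Sum>v\<in>insert 0 S. u v *\<^sub>R v) = x"
      using fS z xs by (simp add: u_def) (smt (verit) sum.cong)
    ultimately show "x \<in> convex hull (insert 0 S)"
      by (auto simp: convex_hull_finite fS)
  qed
qed

lemma lattice_rep_int:
  assumes "Zbasis B" "lattice_vec x" "b \<in> B"
  shows "representation B x b \<in> \<int>"
proof -
  have "x \<in> int_span B" using Zbasis_bas(5)[OF assms(1)] assms(2) by auto
  then obtain c where c: "\<forall>v\<in>B. c v \<in> \<int>" "x = (\<Sum>v\<in>B. c v *\<^sub>R v)" by (auto simp: int_span_def)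
  then show ?thesis using rep_of_sum[OF Zbasis_bas(1)[OF assms(1)] assms(3), of c] assms(3) by auto
qed

lemma int_rep_lattice:
  assumes "Zbasis B" "\<forall>b\<in>B. representation B x b \<in> \<int>"
  shows "lattice_vec x"
proof -
  have "x = (\<Sum>b\<in>B. representation B x b *\<^sub>R b)" using rep_sum[OF Zbasis_bas(1)[OF assms(1)]] by simp
  then have "x \<in> int_span B" using assms(2) by (auto simp: int_span_def)
  then show ?thesis using Zbasis_bas(5)[OF assms(1)] by auto
qed

lemma cone_gen_convex: "convex (cone_gen V)"
  unfolding convex_def cone_gen_def
proof (safe)
  fix c d :: "_ \<Rightarrow> real" and u v :: real
  assume h: "\<forall>v\<in>V. 0 \<le> c v" "\<forall>v\<in>V. 0 \<le> d v" "0 \<le> u" "0 \<le> v" "u + v = 1"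
  show "\<exists>e. (\<forall>w\<in>V. 0 \<le> e w) \<and> u *\<^sub>R (\<Sum>w\<in>V. c w *\<^sub>R w) + v *\<^sub>R (\<Sum>w\<in>V. d w *\<^sub>R w) = (\<Sum>w\<in>V. e w *\<^sub>R w)"
    by (rule exI[of _ "\<lambda>w. u * c w + v * d w"])
       (use h in \<open>auto simp: scaleR_sum_right sum.distrib scaleR_add_left\<close>)
qed

lemma zero_in_cone_gen: "0 \<in> cone_gen V"
  unfolding cone_gen_def by (rule CollectI, rule exI[of _ "\<lambda>_. 0"]) auto

lemma aff_dim_cone: "0 \<in> X \<Longrightarrow> aff_dim X = int (dim X)"
  using aff_dim_eq_dim[of 0 X] by (simp add: hull_inc)

lemma dim_cone_gen:
  assumes "bas B" "S \<subseteq> B"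
  shows "dim (cone_gen S) = card S"
proof -
  have iS: "independent S" using assms by (meson bas_def independent_mono)
  have "S \<subseteq> cone_gen S"
  proof
    fix s assume "s \<in> S"
    have fS: "finite S" using assms by (meson bas_def finite_subset)
    have "(\<Sum>v\<in>S. (if v = s then 1 else 0) *\<^sub>R v) = (\<Sum>v\<in>S. if v = s then s else 0)"
      by (rule sum.cong) auto
    also have "\<dots> = s" using fS \<open>s \<in> S\<close> by simp
    finally show "s \<in> cone_gen S" unfolding cone_gen_def
      by (intro CollectI exI[of _ "\<lambda>v. if v = s then 1 else 0"]) auto
  qed
  moreover have "cone_gen S \<subseteq> span S"
    apply (clarsimp simp: cone_gen_def)
    apply (rule span_sum)
    apply (rule span_scale)
    apply (rule span_base)
    by assumption
  ultimately have "span (cone_gen S) = span S"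
    by (metis span_mono span_span subset_antisym)
  then show ?thesis using dim_eq_card[of S "cone_gen S"] iS by simp
qed

lemma cone_rep_nonneg:
  "bas B \<Longrightarrow> x \<in> cone_gen B \<Longrightarrow> b \<in> B \<Longrightarrow> 0 \<le> representation B x b"
  using cone_gen_rep[of B B] by auto

lemma cone_gen_add: "bas B \<Longrightarrow> S \<subseteq> B \<Longrightarrow> x \<in> cone_gen S \<Longrightarrow> y \<in> cone_gen S \<Longrightarrow> x + y \<in> cone_gen S"
  by (simp add: cone_gen_rep rep_add)

lemma cone_gen_scale: "bas B \<Longrightarrow> S \<subseteq> B \<Longrightarrow> x \<in> cone_gen S \<Longrightarrow> 0 \<le> t \<Longrightarrow> t *\<^sub>R x \<in> cone_gen S"
  by (simp add: cone_gen_rep rep_scale)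

lemma face_scale:
  assumes F: "F face_of C" and x: "x \<in> F" and C: "\<And>y t. y \<in> C \<Longrightarrow> 0 \<le> t \<Longrightarrow> t *\<^sub>R y \<in> C"
    and t: "0 \<le> t" and z: "0 \<in> F"
  shows "t *\<^sub>R x \<in> F"
proof (cases "t \<le> 1")
  case True
  have "t *\<^sub>R x \<in> closed_segment 0 x" using t True by (auto simp: in_segment)
  then show ?thesis using face_of_imp_convex[OF F] x z convex_contains_segment by blast
next
  case False
  have xC: "x \<in> C" using F x face_of_imp_subset by blast
  show ?thesis
  proof (cases "x = 0")
    case True then show ?thesis using z by simp
  next
    case nz: False
    have ne: "t *\<^sub>R x \<noteq> x"
    proof
      assume "t *\<^sub>R x = x"
      then have "(t - 1) *\<^sub>R x = 0" by (simp add: algebra_simps)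
      then show False using False nz by simp
    qed
    have "x \<in> closed_segment 0 (t *\<^sub>R x)"
      unfolding in_segment using False
      by (intro exI[of _ "1/t"]) auto
    then have "x \<in> open_segment 0 (t *\<^sub>R x)"
      unfolding open_segment_def using nz ne by auto
    moreover have "0 \<in> C" using z F face_of_imp_subset by blast
    moreover have "t *\<^sub>R x \<in> C" using C xC t by blast
    ultimately show ?thesis using F x unfolding face_of_def by blast
  qed
qed

lemma face_zero:
  assumes F: "F face_of C" "F \<noteq> {}" and C: "\<And>y t. y \<in> C \<Longrightarrow> 0 \<le> t \<Longrightarrow> t *\<^sub>R y \<in> C"
  shows "0 \<in> F"
proof -
  obtain x where x: "x \<in> F" using F by blast
  have xC: "x \<in> C" using F x face_of_imp_subset by blast
  show ?thesis
  proof (cases "x = 0")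
    case True then show ?thesis using x by simp
  next
    case False
    have "x = midpoint 0 (2 *\<^sub>R x)" by (simp add: midpoint_def)
    then have "x \<in> open_segment 0 (2 *\<^sub>R x)" using False
      by (metis midpoint_in_open_segment scaleR_eq_0_iff zero_neq_numeral)
    moreover have "0 \<in> C" using C[OF xC, of 0] by simp
    moreover have "2 *\<^sub>R x \<in> C" using C xC by simp
    ultimately show ?thesis using F x unfolding face_of_def by blast
  qed
qed

lemma face_of_simplicial:
  assumes B: "bas B" and F: "F face_of cone_gen B" "F \<noteq> {}"
  shows "F = cone_gen {b\<in>B. b \<in> F}"
proof -
  define S where "S = {b\<in>B. b \<in> F}"
  have SB: "S \<subseteq> B" by (auto simp: S_def)
  have Csc: "\<And>y t. y \<in> cone_gen B \<Longrightarrow> 0 \<le> t \<Longrightarrow> t *\<^sub>R y \<in> cone_gen B"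
    using cone_gen_scale[OF B order_refl] by blast
  have z: "0 \<in> F" using face_zero[OF F Csc] .
  have sc: "\<And>x t. x \<in> F \<Longrightarrow> 0 \<le> t \<Longrightarrow> t *\<^sub>R x \<in> F"
    using face_scale[OF F(1) _ Csc _ z] by blast
  have cvx: "convex F" using F face_of_imp_convex by blast
  have ad: "x + y \<in> F" if "x \<in> F" "y \<in> F" for x y
  proof -
    have "(1/2) *\<^sub>R x + (1/2) *\<^sub>R y \<in> F" by (rule convexD[OF cvx that]) auto
    then have "2 *\<^sub>R ((1/2) *\<^sub>R x + (1/2) *\<^sub>R y) \<in> F" using sc by simp
    then show ?thesis by (simp add: scaleR_add_right)
  qed
  have fB: "finite B" using B by (auto simp: bas_def)
  have sumF: "(\<Sum>v\<in>T. c v *\<^sub>R v) \<in> F" if h: "\<forall>v\<in>T. c v \<ge> 0" "T \<subseteq> S" for T c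
  proof -
    have fT: "finite T" using finite_subset[OF _ fB] h(2) SB by (meson order_trans)
    from fT h show ?thesis
    proof (induction T rule: finite_induct)
      case empty then show ?case using z by simp
    next
      case (insert a T)
      have "a \<in> F" using insert.prems(2) by (auto simp: S_def)
      moreover have "c a \<ge> 0" using insert.prems(1) by simp
      ultimately have "c a *\<^sub>R a \<in> F" by (rule sc)
      moreover have "(\<Sum>v\<in>T. c v *\<^sub>R v) \<in> F" using insert.IH insert.prems by simp
      ultimately show ?case using insert.hyps by (simp add: ad)
    qed
  qed
  show ?thesis
  proof
    show "cone_gen {b\<in>B. b \<in> F} \<subseteq> F" unfolding S_def[symmetric]
    proof
      fix x assume "x \<in> cone_gen S"
      then obtain c where "\<forall>v\<in>S. c v \<ge> 0" "x = (\<Sum>v\<in>S. c v *\<^sub>R v)" by (auto simp: cone_gen_def)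
      then show "x \<in> F" using sumF[of S c] by simp
    qed
  next
    show "F \<subseteq> cone_gen {b \<in> B. b \<in> F}"
    proof
      fix x assume xF: "x \<in> F"
      have xC: "x \<in> cone_gen B" using F xF face_of_imp_subset by blast
      have pos: "b \<in> F" if bB: "b \<in> B" and rp: "representation B x b > 0" for b
      proof -
        define r where "r = representation B x b"
        define y where "y = x - r *\<^sub>R b"
        have rbC: "r *\<^sub>R b \<in> cone_gen B"
          using rp bB B by (simp add: cone_gen_rep rep_scale rep_basis r_def)
        have yC: "y \<in> cone_gen B"
          using xC bB B by (auto simp: cone_gen_rep y_def rep_diff rep_scale rep_basis r_def)
        have xm: "x = midpoint (2 *\<^sub>R (r *\<^sub>R b)) (2 *\<^sub>R y)"
          by (simp add: midpoint_def y_def algebra_simps)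
        have "2 *\<^sub>R (r *\<^sub>R b) \<in> F"
        proof (cases "2 *\<^sub>R (r *\<^sub>R b) = 2 *\<^sub>R y")
          case True then show ?thesis using xm xF by (simp add: midpoint_def)
        next
          case False
          then have "x \<in> open_segment (2 *\<^sub>R (r *\<^sub>R b)) (2 *\<^sub>R y)"
            using xm midpoint_in_open_segment by metis
          moreover have "2 *\<^sub>R (r *\<^sub>R b) \<in> cone_gen B" "2 *\<^sub>R y \<in> cone_gen B"
            using Csc[OF rbC, of 2] Csc[OF yC, of 2] by simp_all
          ultimately show ?thesis using F(1) xF unfolding face_of_def by blast
        qed
        then have h2: "(2 * r) *\<^sub>R b \<in> F" by simp
        have r0: "r > 0" using rp r_def by simp
        have "(1 / (2 * r)) *\<^sub>R ((2 * r) *\<^sub>R b) \<in> F" using sc[OF h2, of "1 / (2 * r)"] r0 by simp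
        moreover have "(1 / (2 * r)) *\<^sub>R ((2 * r) *\<^sub>R b) = b" using r0 by simp
        ultimately show ?thesis by simp
      qed
      show "x \<in> cone_gen {b \<in> B. b \<in> F}"
        unfolding cone_gen_rep[OF B, of "{b \<in> B. b \<in> F}", simplified]
      proof (intro CollectI conjI ballI)
        show "0 \<le> representation B x b" if "b \<in> B" for b using cone_rep_nonneg[OF B xC that] .
        show "representation B x b = 0" if "b \<in> B - {b \<in> B. b \<in> F}" for b
          using cone_rep_nonneg[OF B xC, of b] pos[of b] that by force
      qed
    qed
  qed
qed

lemma int_pos_ge1: "(x::real) \<in> \<int> \<Longrightarrow> 0 < x \<Longrightarrow> 1 \<le> x"
  by (elim Ints_cases) auto

lemma mem_cone_gen_sub:
  assumes "bas B" "S \<subseteq> B" "x \<in> cone_gen S"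
  shows "x = (\<Sum>v\<in>S. representation B x v *\<^sub>R v)" "\<And>v. v \<in> B \<Longrightarrow> 0 \<le> representation B x v"
    "\<And>v. v \<in> B \<Longrightarrow> v \<notin> S \<Longrightarrow> representation B x v = 0"
proof -
  have h: "\<forall>b\<in>B. 0 \<le> representation B x b" "\<forall>b\<in>B-S. representation B x b = 0"
    using assms cone_gen_rep[OF assms(1,2)] by auto
  have fB: "finite B" using assms by (auto simp: bas_def)
  have "x = (\<Sum>b\<in>B. representation B x b *\<^sub>R b)" using rep_sum[OF assms(1)] by simp
  also have "\<dots> = (\<Sum>b\<in>S. representation B x b *\<^sub>R b)"
    using h assms(2) by (intro sum.mono_neutral_cong_right[OF fB]) auto
  finally show "x = (\<Sum>v\<in>S. representation B x v *\<^sub>R v)" .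
  show "\<And>v. v \<in> B \<Longrightarrow> 0 \<le> representation B x v" using h by auto
  show "\<And>v. v \<in> B \<Longrightarrow> v \<notin> S \<Longrightarrow> representation B x v = 0" using h by auto
qed

lemma gen_in_cone_gen:
  assumes "bas B" "S \<subseteq> B" "s \<in> S"
  shows "s \<in> cone_gen S"
  using assms by (auto simp: cone_gen_rep rep_basis)

lemma gen_unique_sub:
  assumes Z: "Zbasis B" "Zbasis B'" and S: "S \<subseteq> B" "S' \<subseteq> B'" and eq: "cone_gen S = cone_gen S'"
  shows "S \<subseteq> S'"
proof
  fix s assume sS: "s \<in> S"
  have bB: "bas B" and bB': "bas B'" using Z Zbasis_bas by auto
  have sB: "s \<in> B" using sS S by auto
  have fB': "finite B'" using bB' by (auto simp: bas_def)
  have fS': "finite S'" using finite_subset[OF S(2) fB'] .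
  have s_in: "s \<in> cone_gen S'" using gen_in_cone_gen[OF bB S(1) sS] eq by simp
  define c where "c v = representation B' s v" for v
  have s_sum: "s = (\<Sum>v\<in>S'. c v *\<^sub>R v)" using mem_cone_gen_sub(1)[OF bB' S(2) s_in] by (simp add: c_def)
  have c_nn: "0 \<le> c v" if "v \<in> S'" for v using mem_cone_gen_sub(2)[OF bB' S(2) s_in] that S(2) by (auto simp: c_def)
  have v_in: "v \<in> cone_gen S" if "v \<in> S'" for v using gen_in_cone_gen[OF bB' S(2) that] eq by simp
  have d_nn: "0 \<le> representation B v t" if "v \<in> S'" "t \<in> B" for v t
    using mem_cone_gen_sub(2)[OF bB S(1) v_in[OF that(1)]] that by auto
  have zero_terms: "c v * representation B v t = 0" if "v \<in> S'" "t \<in> B" "t \<noteq> s" for v t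
  proof -
    have "representation B s t = (\<Sum>v\<in>S'. c v * representation B v t)"
      by (subst s_sum) (simp add: rep_sumf[OF bB] rep_scale[OF bB])
    moreover have "representation B s t = 0" using rep_basis[OF bB that(2) sB] that by simp
    ultimately have "(\<Sum>v\<in>S'. c v * representation B v t) = 0" by simp
    moreover have "\<forall>v\<in>S'. 0 \<le> c v * representation B v t" using c_nn d_nn that by auto
    ultimately have "\<forall>v\<in>S'. c v * representation B v t = 0"
      by (simp add: sum_nonneg_eq_0_iff[OF fS'])
    then show ?thesis using that(1) by simp
  qed
  have s0: "s \<noteq> 0" using sB Zbasis_bas(3)[OF Z(1)] by auto
  obtain v where vS': "v \<in> S'" and cv: "c v \<noteq> 0"
  proof (rule ccontr)
    assume "\<not> thesis"
    then have "\<forall>v\<in>S'. c v = 0" using that by blast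
    then have "s = 0" using s_sum by simp
    then show False using s0 by simp
  qed
  have vB': "v \<in> B'" using vS' S by auto
  have dz: "representation B v t = 0" if "t \<in> B" "t \<noteq> s" for t
    using zero_terms[OF vS' that] cv by simp
  define lam where "lam = representation B v s"
  have fB: "finite B" using bB by (auto simp: bas_def)
  have v_eq: "v = lam *\<^sub>R s"
  proof -
    have "v = (\<Sum>t\<in>B. representation B v t *\<^sub>R t)" using rep_sum[OF bB] by simp
    also have "\<dots> = (\<Sum>t\<in>B. if t = s then lam *\<^sub>R s else 0)"
      by (rule sum.cong) (auto simp: dz lam_def)
    also have "\<dots> = lam *\<^sub>R s" using fB sB by simp
    finally show ?thesis .
  qed
  have v0: "v \<noteq> 0" using vB' Zbasis_bas(3)[OF Z(2)] by auto
  have lam_int: "lam \<in> \<int>" unfolding lam_def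
    by (rule lattice_rep_int[OF Z(1) Zbasis_bas(4)[OF Z(2) vB'] sB])
  have lam_nn: "0 \<le> lam" unfolding lam_def using d_nn[OF vS' sB] .
  have lam_pos: "0 < lam" using lam_nn v0 v_eq by (cases "lam = 0") auto
  have s_eq: "s = (1 / lam) *\<^sub>R v" using v_eq lam_pos by simp
  have "representation B' s v = (1 / lam) * representation B' v v"
    by (subst s_eq) (rule rep_scale[OF bB'])
  then have "representation B' s v = 1 / lam"
    using rep_basis[OF bB' vB' vB'] by simp
  then have inv_int: "1 / lam \<in> \<int>"
    using lattice_rep_int[OF Z(2) Zbasis_bas(4)[OF Z(1) sB] vB'] by simp
  have "1 \<le> lam" using int_pos_ge1[OF lam_int lam_pos] .
  moreover have "1 \<le> 1 / lam" using int_pos_ge1[OF inv_int] lam_pos by simp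
  ultimately have "lam = 1" using lam_pos by (simp add: le_divide_eq_1_pos)
  then have "v = s" using v_eq by simp
  then show "s \<in> S'" using vS' by simp
qed

lemma gen_unique:
  assumes "Zbasis B" "Zbasis B'" "S \<subseteq> B" "S' \<subseteq> B'" "cone_gen S = cone_gen S'"
  shows "S = S'"
  using gen_unique_sub[OF assms] gen_unique_sub[OF assms(2,1,4,3) assms(5)[symmetric]] by auto

lemma fan_cone:
  assumes "fan \<Sigma>" "\<sigma> \<in> \<Sigma>"
  shows "convex \<sigma>" "0 \<in> \<sigma>"
  using assms by (auto simp: fan_def cone_gen_convex zero_in_cone_gen)

lemma top_cone_maximal:
  fixes \<Sigma> :: "(real^'n) set set"
  assumes F: "fan \<Sigma>" and s: "\<sigma> \<in> top_cones \<Sigma>"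
  shows "maximal_cone \<Sigma> \<sigma>"
proof -
  have sS: "\<sigma> \<in> \<Sigma>" and ds: "dim \<sigma> = CARD('n)" using s by (auto simp: top_cones_def)
  have "\<not> \<sigma> \<subset> \<tau>" if tS: "\<tau> \<in> \<Sigma>" for \<tau>
  proof
    assume lt: "\<sigma> \<subset> \<tau>"
    have "(\<sigma> \<inter> \<tau>) face_of \<tau>" using F sS tS by (auto simp: fan_def)
    then have fc: "\<sigma> face_of \<tau>" using lt by (simp add: Int_absorb2 less_imp_le)
    have "aff_dim \<sigma> < aff_dim \<tau>"
      using face_of_aff_dim_lt[OF fan_cone(1)[OF F tS] fc] lt by auto
    moreover have "aff_dim \<sigma> = int CARD('n)" using aff_dim_cone[OF fan_cone(2)[OF F sS]] ds by simp
    moreover have "aff_dim \<tau> \<le> int CARD('n)" using aff_dim_le_DIM[of \<tau>] by simp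
    ultimately show False by simp
  qed
  then show ?thesis using sS by (auto simp: maximal_cone_def)
qed

lemma top_cone_basis:
  fixes \<Sigma> :: "(real^'n) set set"
  assumes "fan \<Sigma>" "nonsingular \<Sigma>" "\<sigma> \<in> top_cones \<Sigma>"
  shows "\<exists>B. Zbasis B \<and> \<sigma> = cone_gen B"
  using assms top_cone_maximal by (auto simp: nonsingular_def)

definition basis_of :: "(real^'n) set \<Rightarrow> (real^'n) set" where
  "basis_of \<sigma> = (SOME B. Zbasis B \<and> \<sigma> = cone_gen B)"

lemma basis_of:
  fixes \<Sigma> :: "(real^'n) set set"
  assumes "fan \<Sigma>" "nonsingular \<Sigma>" "\<sigma> \<in> top_cones \<Sigma>"
  shows "Zbasis (basis_of \<sigma>)" "\<sigma> = cone_gen (basis_of \<sigma>)"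
  using someI_ex[OF top_cone_basis[OF assms]] by (auto simp: basis_of_def)

lemma basis_of_unique:
  assumes "Zbasis B" "\<sigma> = cone_gen B"
  shows "basis_of \<sigma> = B"
proof -
  have ex: "\<exists>B. Zbasis B \<and> \<sigma> = cone_gen B" using assms by blast
  have "Zbasis (basis_of \<sigma>)" "\<sigma> = cone_gen (basis_of \<sigma>)"
    using someI_ex[OF ex] by (auto simp: basis_of_def)
  then show ?thesis using gen_unique[OF _ assms(1) order_refl order_refl] assms(2) by auto
qed

lemma unit_part_eq:
  assumes "fan \<Sigma>" "nonsingular \<Sigma>" "\<sigma> \<in> top_cones \<Sigma>"
  shows "unit_part \<sigma> = convex hull (insert 0 (basis_of \<sigma>))"
proof -
  have P: "(Zbasis B \<and> \<sigma> = cone_gen B) \<longleftrightarrow> B = basis_of \<sigma>" for B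
    using basis_of[OF assms] basis_of_unique by metis
  show ?thesis unfolding unit_part_def P by simp
qed

lemma top_distinct_dim:
  fixes \<Sigma> :: "(real^'n) set set"
  assumes F: "fan \<Sigma>" and s: "\<sigma> \<in> top_cones \<Sigma>" and t: "\<tau> \<in> top_cones \<Sigma>" and ne: "\<sigma> \<noteq> \<tau>"
  shows "dim (\<sigma> \<inter> \<tau>) < CARD('n)"
proof -
  have sS: "\<sigma> \<in> \<Sigma>" and tS: "\<tau> \<in> \<Sigma>" and ds: "dim \<sigma> = CARD('n)" using s t by (auto simp: top_cones_def)
  have fc: "(\<sigma> \<inter> \<tau>) face_of \<sigma>" using F sS tS by (auto simp: fan_def)
  have "\<sigma> \<inter> \<tau> \<noteq> \<sigma>"
  proof
    assume "\<sigma> \<inter> \<tau> = \<sigma>"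
    then have "\<sigma> \<subseteq> \<tau>" by auto
    then have "\<sigma> \<subset> \<tau>" using ne by auto
    then show False using top_cone_maximal[OF F s] tS by (auto simp: maximal_cone_def)
  qed
  then have "aff_dim (\<sigma> \<inter> \<tau>) < aff_dim \<sigma>" using face_of_aff_dim_lt[OF fan_cone(1)[OF F sS] fc] by simp
  moreover have "aff_dim \<sigma> = int CARD('n)" using aff_dim_cone[OF fan_cone(2)[OF F sS]] ds by simp
  moreover have "aff_dim (\<sigma> \<inter> \<tau>) = int (dim (\<sigma> \<inter> \<tau>))"
    by (rule aff_dim_cone) (use fan_cone(2)[OF F sS] fan_cone(2)[OF F tS] in auto)
  ultimately show ?thesis by simp
qed

lemma adjacent_sym: "adjacent (\<Sigma> :: (real^'n) set set) \<sigma> \<tau> \<Longrightarrow> adjacent \<Sigma> \<tau> \<sigma>"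
  unfolding adjacent_def by (metis Int_commute)

lemma inter_face_gen:
  fixes \<Sigma> :: "(real^'n) set set"
  assumes F: "fan \<Sigma>" "nonsingular \<Sigma>" and s: "\<sigma> \<in> top_cones \<Sigma>" and t: "\<tau> \<in> \<Sigma>"
  shows "\<sigma> \<inter> \<tau> = cone_gen {b \<in> basis_of \<sigma>. b \<in> \<sigma> \<inter> \<tau>}"
proof -
  have sS: "\<sigma> \<in> \<Sigma>" using s by (auto simp: top_cones_def)
  have fc: "(\<sigma> \<inter> \<tau>) face_of cone_gen (basis_of \<sigma>)"
    using F sS t basis_of[OF F s] by (auto simp: fan_def)
  have ne: "\<sigma> \<inter> \<tau> \<noteq> {}" using fan_cone(2)[OF F(1) sS] fan_cone(2)[OF F(1) t] by auto
  show ?thesis using face_of_simplicial[OF Zbasis_bas(1)[OF basis_of(1)[OF F s]] fc ne] .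
qed

lemma card_pos: "0 < CARD('n::finite)"
  by simp

lemma adj_pres:
  fixes \<Sigma> :: "(real^'n) set set"
  assumes F: "fan \<Sigma>" "nonsingular \<Sigma>" and adj: "adjacent \<Sigma> \<sigma> \<tau>"
  shows "\<exists>W u u'. adjacent_pres \<Sigma> \<sigma> \<tau> W u u'"
proof -
  have s: "\<sigma> \<in> top_cones \<Sigma>" and t: "\<tau> \<in> top_cones \<Sigma>" and dI: "dim (\<sigma> \<inter> \<tau>) = CARD('n) - 1"
    using adj by (auto simp: adjacent_def)
  have sS: "\<sigma> \<in> \<Sigma>" and tS: "\<tau> \<in> \<Sigma>" using s t by (auto simp: top_cones_def)
  define B where "B = basis_of \<sigma>"
  define B' where "B' = basis_of \<tau>"
  define S where "S = {b \<in> B. b \<in> \<sigma> \<inter> \<tau>}"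
  define S' where "S' = {b \<in> B'. b \<in> \<tau> \<inter> \<sigma>}"
  have ZB: "Zbasis B" "\<sigma> = cone_gen B" using basis_of[OF F s] by (auto simp: B_def)
  have ZB': "Zbasis B'" "\<tau> = cone_gen B'" using basis_of[OF F t] by (auto simp: B'_def)
  have e1: "\<sigma> \<inter> \<tau> = cone_gen S" unfolding S_def B_def by (rule inter_face_gen[OF F s tS])
  have e2: "\<tau> \<inter> \<sigma> = cone_gen S'" unfolding S'_def B'_def by (rule inter_face_gen[OF F t sS])
  have SB: "S \<subseteq> B" and SB': "S' \<subseteq> B'" by (auto simp: S_def S'_def)
  have SS: "S = S'" using gen_unique[OF ZB(1) ZB'(1) SB SB'] e1 e2 by (simp add: Int_commute)
  have cS: "card S = CARD('n) - 1" using dim_cone_gen[OF Zbasis_bas(1)[OF ZB(1)] SB] e1 dI by simp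
  have fB: "finite B" "finite B'" using ZB(1) ZB'(1) by (auto simp: Zbasis_def)
  have cB: "card B = CARD('n)" "card B' = CARD('n)" using ZB(1) ZB'(1) by (auto simp: Zbasis_def)
  have "card (B - S) = 1" using card_Diff_subset[OF finite_subset[OF SB fB(1)] SB] cS cB card_pos[where 'n='n] by simp
  then obtain u where u: "B - S = {u}" by (meson card_1_singletonE)
  have "card (B' - S) = 1" using card_Diff_subset[OF finite_subset[OF SB' fB(2)] SB'] cS cB card_pos[where 'n='n] SS by simp
  then obtain u' where u': "B' - S = {u'}" by (meson card_1_singletonE)
  have Bu: "B = insert u S" "u \<notin> S" using u SB by auto
  have Bu': "B' = insert u' S" "u' \<notin> S" using u' SB' SS by auto
  have "adjacent_pres \<Sigma> \<sigma> \<tau> S u u'"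
    unfolding adjacent_pres_def using adj Bu Bu' ZB ZB' by auto
  then show ?thesis by blast
qed

lemma sum_insert_split:
  assumes "finite W" "u \<notin> W"
  shows "(\<Sum>b\<in>insert u W. f b) = f u + (\<Sum>a\<in>W. f a)"
  using assms by simp

lemma change_basis:
  assumes bB: "bas (insert u W)" and bB': "bas (insert u' W)" and uW: "u \<notin> W" "u' \<notin> W"
    and u'eq: "u' = - u + (\<Sum>a\<in>W. k a *\<^sub>R a)"
  shows "representation (insert u' W) x u' = - representation (insert u W) x u"
    "\<And>a. a \<in> W \<Longrightarrow> representation (insert u' W) x a =
         representation (insert u W) x a + representation (insert u W) x u * k a"
    "ell (insert u' W) x = ell (insert u W) x - (2 - sum k W) * representation (insert u W) x u"
proof -
  define B where "B = insert u W"
  define B' where "B' = insert u' W"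
  have fW: "finite W" using bB by (auto simp: bas_def)
  define r where "r = representation B x"
  define t where "t = r u"
  define c where "c b = (if b = u' then - t else r b + t * k b)" for b
  have x1: "x = t *\<^sub>R u + (\<Sum>a\<in>W. r a *\<^sub>R a)"
  proof -
    have "x = (\<Sum>b\<in>B. r b *\<^sub>R b)" using rep_sum[OF bB[folded B_def], of x] by (simp add: r_def)
    also have "\<dots> = t *\<^sub>R u + (\<Sum>a\<in>W. r a *\<^sub>R a)" unfolding B_def t_def using fW uW by simp
    finally show ?thesis .
  qed
  have x2: "t *\<^sub>R u + (\<Sum>a\<in>W. r a *\<^sub>R a) = (- t) *\<^sub>R u' + (\<Sum>a\<in>W. (r a + t * k a) *\<^sub>R a)"
  proof -
    have "t *\<^sub>R u = (- t) *\<^sub>R u' + (\<Sum>a\<in>W. (t * k a) *\<^sub>R a)"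
      unfolding u'eq by (simp add: scaleR_sum_right scaleR_diff_right sum_negf)
    then show ?thesis by (simp add: scaleR_add_left sum.distrib)
  qed
  have x3: "(- t) *\<^sub>R u' + (\<Sum>a\<in>W. (r a + t * k a) *\<^sub>R a) = (\<Sum>b\<in>B'. c b *\<^sub>R b)"
  proof -
    have "(\<Sum>b\<in>B'. c b *\<^sub>R b) = c u' *\<^sub>R u' + (\<Sum>a\<in>W. c a *\<^sub>R a)"
      unfolding B'_def using fW uW by simp
    moreover have "(\<Sum>a\<in>W. c a *\<^sub>R a) = (\<Sum>a\<in>W. (r a + t * k a) *\<^sub>R a)"
      using uW by (intro sum.cong) (auto simp: c_def)
    ultimately show ?thesis by (simp add: c_def)
  qed
  have xs: "x = (\<Sum>b\<in>B'. c b *\<^sub>R b)" using x1 x2 x3 by simp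
  have rc: "representation B' x b = c b" if "b \<in> B'" for b
    using rep_of_sum[OF bB'[folded B'_def] that, of c] xs by simp
  show r1: "representation (insert u' W) x u' = - representation (insert u W) x u"
    using rc[of u'] by (simp add: B'_def c_def t_def B_def r_def)
  show r2: "representation (insert u' W) x a =
         representation (insert u W) x a + representation (insert u W) x u * k a" if "a \<in> W" for a
    using rc[of a] that uW by (auto simp: B'_def c_def t_def B_def r_def)
  have "ell (insert u' W) x = c u' + (\<Sum>a\<in>W. c a)"
    unfolding ell_def B'_def[symmetric] using rc fW uW by (simp add: B'_def)
  also have "(\<Sum>a\<in>W. c a) = (\<Sum>a\<in>W. r a + t * k a)"
    using uW by (intro sum.cong) (auto simp: c_def)
  also have "\<dots> = (\<Sum>a\<in>W. r a) + t * sum k W"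
    by (simp add: sum.distrib sum_distrib_left)
  finally have e1: "ell (insert u' W) x = - t + (\<Sum>a\<in>W. r a) + t * sum k W" by (simp add: c_def)
  have e2: "ell (insert u W) x = t + (\<Sum>a\<in>W. r a)"
    unfolding ell_def B_def[symmetric] r_def[symmetric] using fW uW by (simp add: B_def t_def)
  show "ell (insert u' W) x = ell (insert u W) x - (2 - sum k W) * representation (insert u W) x u"
    using e1 e2 by (simp add: t_def r_def B_def algebra_simps)
qed

lemma adj_pres_props:
  assumes "adjacent_pres \<Sigma> \<sigma> \<tau> W u u'"
  shows "Zbasis (insert u W)" "Zbasis (insert u' W)" "u \<notin> W" "u' \<notin> W"
    "\<sigma> = cone_gen (insert u W)" "\<tau> = cone_gen (insert u' W)" "adjacent \<Sigma> \<sigma> \<tau>"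
  using assms by (auto simp: adjacent_pres_def)

lemma coef_minus1:
  fixes \<Sigma> :: "(real^'n) set set"
  assumes F: "fan \<Sigma>" "nonsingular \<Sigma>" and P: "adjacent_pres \<Sigma> \<sigma> \<tau> W u u'"
  shows "representation (insert u W) u' u = -1"
proof -
  note pp = adj_pres_props[OF P]
  define B where "B = insert u W"
  define B' where "B' = insert u' W"
  have bB: "bas B" and bB': "bas B'" using pp Zbasis_bas by (auto simp: B_def B'_def)
  have fW: "finite W" using bB by (auto simp: bas_def B_def)
  define c where "c = representation B u' u"
  define c' where "c' = representation B' u u'"
  have uB: "u \<in> B" and u'B': "u' \<in> B'" by (auto simp: B_def B'_def)
  have cI: "c \<in> \<int>" unfolding c_def
    using lattice_rep_int[OF pp(1)[folded B_def] Zbasis_bas(4)[OF pp(2) u'B'[unfolded B'_def]] uB] .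
  have c'I: "c' \<in> \<int>" unfolding c'_def
    using lattice_rep_int[OF pp(2)[folded B'_def] Zbasis_bas(4)[OF pp(1) uB[unfolded B_def]] u'B'] .
  have u_exp: "u = c' *\<^sub>R u' + (\<Sum>a\<in>W. representation B' u a *\<^sub>R a)"
    using rep_sum[OF bB', of u] fW pp(4) by (simp add: B'_def c'_def)
  have "1 = representation B u u" using rep_basis[OF bB uB uB] by simp
  also have "\<dots> = c' * c + (\<Sum>a\<in>W. representation B' u a * representation B a u)"
    by (subst (1) u_exp) (simp add: rep_add[OF bB] rep_scale[OF bB] rep_sumf[OF bB] c_def)
  also have "(\<Sum>a\<in>W. representation B' u a * representation B a u) = 0"
    using rep_basis[OF bB uB] pp(3) by (intro sum.neutral) (auto simp: B_def)
  finally have cc: "c * c' = 1" by (simp add: mult.commute)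
  from cI c'I obtain i j where ij: "c = of_int i" "c' = of_int j" by (auto elim!: Ints_cases)
  have "i * j = 1" using cc ij by (metis of_int_eq_1_iff of_int_mult)
  then have c_cases: "c = 1 \<or> c = -1" using ij zmult_eq_1_iff by auto
  have "c \<noteq> 1"
  proof
    assume c1: "c = 1"
    define k where "k a = representation B u' a" for a
    have u'_exp: "u' = u + (\<Sum>a\<in>W. k a *\<^sub>R a)"
      using rep_sum[OF bB, of u'] fW pp(3) c1 by (simp add: B_def c_def k_def)
    define M where "M = 1 + (\<Sum>a\<in>W. \<bar>k a\<bar>)"
    have kM: "0 \<le> k a + M" if "a \<in> W" for a
    proof -
      have "\<bar>k a\<bar> \<le> (\<Sum>a\<in>W. \<bar>k a\<bar>)" using member_le_sum[OF that, of "\<lambda>a. \<bar>k a\<bar>"] fW by simp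
      then show ?thesis unfolding M_def by linarith
    qed
    have M0: "0 \<le> M" unfolding M_def by (simp add: sum_nonneg add_nonneg_nonneg)
    define p where "p e = u' + (\<Sum>a\<in>W. (M + e a) *\<^sub>R a)" for e :: "_ \<Rightarrow> real"
    have p_in: "p e \<in> \<sigma> \<inter> \<tau>" if e: "\<forall>a\<in>W. 0 \<le> e a" for e
    proof
      have pe: "p e = (\<Sum>v\<in>B'. (if v = u' then 1 else M + e v) *\<^sub>R v)"
      proof -
        have "(\<Sum>v\<in>B'. (if v = u' then 1 else M + e v) *\<^sub>R v) =
           u' + (\<Sum>v\<in>W. (if v = u' then 1 else M + e v) *\<^sub>R v)"
          unfolding B'_def using fW pp(4) by simp
        also have "(\<Sum>v\<in>W. (if v = u' then 1 else M + e v) *\<^sub>R v) = (\<Sum>a\<in>W. (M + e a) *\<^sub>R a)"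
          using pp(4) by (intro sum.cong) auto
        finally show ?thesis unfolding p_def by simp
      qed
      have nn: "\<forall>v\<in>B'. 0 \<le> (if v = u' then 1 else M + e v)"
        using e M0 pp(4) by (auto simp: B'_def)
      show "p e \<in> \<tau>" unfolding pp(6) B'_def[symmetric] cone_gen_def
        by (rule CollectI, rule exI[of _ "\<lambda>v. if v = u' then 1 else M + e v"]) (use pe nn in simp)
    next
      have "p e = u + (\<Sum>a\<in>W. (k a + M + e a) *\<^sub>R a)"
        unfolding p_def u'_exp by (simp add: algebra_simps sum.distrib scaleR_add_left)
      also have "\<dots> = (\<Sum>v\<in>B. (if v = u then 1 else k v + M + e v) *\<^sub>R v)"
      proof -
        have "(\<Sum>v\<in>B. (if v = u then 1 else k v + M + e v) *\<^sub>R v) =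
           u + (\<Sum>v\<in>W. (if v = u then 1 else k v + M + e v) *\<^sub>R v)"
          unfolding B_def using fW pp(3) by simp
        also have "(\<Sum>v\<in>W. (if v = u then 1 else k v + M + e v) *\<^sub>R v) = (\<Sum>a\<in>W. (k a + M + e a) *\<^sub>R a)"
          using pp(3) by (intro sum.cong) auto
        finally show ?thesis by simp
      qed
      finally have pe: "p e = (\<Sum>v\<in>B. (if v = u then 1 else k v + M + e v) *\<^sub>R v)" .
      have nn: "\<forall>v\<in>B. 0 \<le> (if v = u then 1 else k v + M + e v)"
        using e kM pp(3) by (auto simp: B_def intro: add_nonneg_nonneg)
      show "p e \<in> \<sigma>" unfolding pp(5) B_def[symmetric] cone_gen_def
        by (rule CollectI, rule exI[of _ "\<lambda>v. if v = u then 1 else k v + M + e v"]) (use pe nn in simp)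
    qed
    have "p (\<lambda>_. 0) \<in> \<sigma> \<inter> \<tau>" by (rule p_in) simp
    then have p0: "p (\<lambda>_. 0) \<in> span (\<sigma> \<inter> \<tau>)" by (rule span_base)
    have aS: "a \<in> span (\<sigma> \<inter> \<tau>)" if aW: "a \<in> W" for a
    proof -
      define e where "e v = (if v = a then 1 else (0::real))" for v
      have "p e \<in> \<sigma> \<inter> \<tau>" by (rule p_in) (simp add: e_def)
      then have "p e \<in> span (\<sigma> \<inter> \<tau>)" by (rule span_base)
      moreover have "p e - p (\<lambda>_. 0) = a"
      proof -
        have "p e - p (\<lambda>_. 0) = (\<Sum>v\<in>W. e v *\<^sub>R v)"
          unfolding p_def by (simp add: sum_subtractf[symmetric] algebra_simps)
        also have "\<dots> = (\<Sum>v\<in>W. if v = a then v else 0)" by (rule sum.cong) (auto simp: e_def)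
        also have "\<dots> = a" using aW fW by simp
        finally show ?thesis .
      qed
      ultimately show ?thesis using p0 span_diff by metis
    qed
    have "u = p (\<lambda>_. 0) - (\<Sum>a\<in>W. (k a + M) *\<^sub>R a)"
      unfolding p_def u'_exp by (simp add: algebra_simps sum.distrib scaleR_add_left)
    moreover have "(\<Sum>a\<in>W. (k a + M) *\<^sub>R a) \<in> span (\<sigma> \<inter> \<tau>)"
      by (rule span_sum, rule span_scale, rule aS)
    ultimately have uS: "u \<in> span (\<sigma> \<inter> \<tau>)" using span_diff[OF p0] by simp
    have "B \<subseteq> span (\<sigma> \<inter> \<tau>)" using uS aS by (auto simp: B_def)
    then have "span B \<subseteq> span (\<sigma> \<inter> \<tau>)" using span_mono[of B "span (\<sigma> \<inter> \<tau>)"] by (simp only: span_span)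
    then have spU: "span (\<sigma> \<inter> \<tau>) = UNIV" using bB by (auto simp: bas_def)
    have "dim (\<sigma> \<inter> \<tau>) = dim (UNIV :: (real^'n) set)" by (metis dim_span spU)
    then have "dim (\<sigma> \<inter> \<tau>) = CARD('n)" by simp
    moreover have "dim (\<sigma> \<inter> \<tau>) = CARD('n) - 1" using pp(7) by (simp add: adjacent_def)
    ultimately show False using card_pos[where 'n='n] by linarith
  qed
  then show ?thesis using c_cases by (simp add: c_def B_def)
qed

lemma convex_ge0: "linear f \<Longrightarrow> convex {x. 0 \<le> (f x :: real)}"
  using convex_linear_vimage[of f "{0..}"] by (simp add: vimage_def)

lemma convex_le1: "linear f \<Longrightarrow> convex {x. (f x :: real) \<le> 1}"
  using convex_linear_vimage[of f "{..1}"] by (simp add: vimage_def)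

lemma memA:
  assumes bB: "bas (insert u W)"
  shows "x \<in> convex hull (insert 0 (insert u W)) \<longleftrightarrow>
    0 \<le> representation (insert u W) x u \<and> (\<forall>a\<in>W. 0 \<le> representation (insert u W) x a)
    \<and> ell (insert u W) x \<le> 1"
  using hull_rep[OF bB order_refl] by auto

lemma memC:
  assumes bB: "bas (insert u W)" and bB': "bas (insert u' W)" and uW: "u \<notin> W" "u' \<notin> W"
    and u'eq: "u' = - u + (\<Sum>a\<in>W. k a *\<^sub>R a)"
  shows "x \<in> convex hull (insert 0 (insert u' W)) \<longleftrightarrow>
    representation (insert u W) x u \<le> 0 \<and>
    (\<forall>a\<in>W. 0 \<le> representation (insert u W) x a + representation (insert u W) x u * k a)
    \<and> ell (insert u W) x - (2 - sum k W) * representation (insert u W) x u \<le> 1"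
proof -
  note cb = change_basis[OF assms]
  have "x \<in> convex hull (insert 0 (insert u' W)) \<longleftrightarrow>
      0 \<le> representation (insert u' W) x u' \<and> (\<forall>a\<in>W. 0 \<le> representation (insert u' W) x a)
    \<and> ell (insert u' W) x \<le> 1"
    by (rule memA[OF bB'])
  also have "\<dots> \<longleftrightarrow> representation (insert u W) x u \<le> 0 \<and>
    (\<forall>a\<in>W. 0 \<le> representation (insert u W) x a + representation (insert u W) x u * k a)
    \<and> ell (insert u W) x - (2 - sum k W) * representation (insert u W) x u \<le> 1"
    using cb by auto
  finally show ?thesis .
qed

lemma memC_cone:
  assumes bB: "bas (insert u W)" and bB': "bas (insert u' W)" and uW: "u \<notin> W" "u' \<notin> W"
    and u'eq: "u' = - u + (\<Sum>a\<in>W. k a *\<^sub>R a)" and x: "x \<in> cone_gen (insert u' W)"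
  shows "representation (insert u W) x u \<le> 0"
  using cone_rep_nonneg[OF bB' x, of u'] change_basis(1)[OF assms(1-5), of x] by simp

lemma crit_convex:
  assumes bB: "bas (insert u W)" and bB': "bas (insert u' W)" and uW: "u \<notin> W" "u' \<notin> W"
    and u'eq: "u' = - u + (\<Sum>a\<in>W. k a *\<^sub>R a)"
    and k0: "\<forall>a\<in>W. 0 \<le> k a" and K2: "sum k W \<le> 2"
  shows "convex (convex hull (insert 0 (insert u W)) \<union> convex hull (insert 0 (insert u' W)))"
proof -
  define B where "B = insert u W"
  define K where "K = sum k W"
  define D where "D = (\<Inter>a\<in>W. {x. 0 \<le> representation B x a}) \<inter>
     (\<Inter>a\<in>W. {x. 0 \<le> representation B x a + representation B x u * k a}) \<inter>
     {x. ell B x \<le> 1} \<inter> {x. ell B x - (2 - K) * representation B x u \<le> 1}"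
  have bB0: "bas B" using bB by (simp add: B_def)
  have cD: "convex D" unfolding D_def
  proof (intro convex_Int convex_INT ballI)
    show "convex {x. 0 \<le> representation B x a}" for a by (rule convex_ge0[OF rep_linear[OF bB0]])
    show "convex {x. 0 \<le> representation B x a + representation B x u * k a}" for a
      by (rule convex_ge0, rule linearI) (simp_all add: rep_add[OF bB0] rep_scale[OF bB0] algebra_simps)
    show "convex {x. ell B x \<le> 1}" by (rule convex_le1[OF ell_linear[OF bB0]])
    show "convex {x. ell B x - (2 - K) * representation B x u \<le> 1}"
      by (rule convex_le1, rule linearI)
         (simp_all add: rep_add[OF bB0] rep_scale[OF bB0] ell_add[OF bB0] ell_scale[OF bB0] algebra_simps)
  qed
  have K2': "0 \<le> 2 - K" using K2 by (simp add: K_def)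
  have eq: "convex hull (insert 0 (insert u W)) \<union> convex hull (insert 0 (insert u' W)) = D"
  proof (rule set_eqI)
    fix x
    define t where "t = representation B x u"
    have mA: "x \<in> convex hull (insert 0 (insert u W)) \<longleftrightarrow> 0 \<le> t \<and> (\<forall>a\<in>W. 0 \<le> representation B x a) \<and> ell B x \<le> 1"
      using memA[OF bB] by (simp add: B_def t_def)
    have mC: "x \<in> convex hull (insert 0 (insert u' W)) \<longleftrightarrow> t \<le> 0 \<and>
       (\<forall>a\<in>W. 0 \<le> representation B x a + t * k a) \<and> ell B x - (2 - K) * t \<le> 1"
      using memC[OF assms(1-5)] by (simp add: B_def t_def K_def)
    have mD: "x \<in> D \<longleftrightarrow> (\<forall>a\<in>W. 0 \<le> representation B x a) \<and>
       (\<forall>a\<in>W. 0 \<le> representation B x a + t * k a) \<and> ell B x \<le> 1 \<and> ell B x - (2 - K) * t \<le> 1"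
      by (simp add: D_def t_def)
    show "x \<in> convex hull (insert 0 (insert u W)) \<union> convex hull (insert 0 (insert u' W)) \<longleftrightarrow> x \<in> D"
    proof (cases "0 \<le> t")
      case True
      have a1: "0 \<le> t * k a" if "a \<in> W" for a using True k0 that by simp
      have a2: "0 \<le> (2 - K) * t" using True K2' by simp
      show ?thesis unfolding Un_iff mA mC mD
      proof
        assume h: "(0 \<le> t \<and> (\<forall>a\<in>W. 0 \<le> representation B x a) \<and> ell B x \<le> 1) \<or>
          (t \<le> 0 \<and> (\<forall>a\<in>W. 0 \<le> representation B x a + t * k a) \<and> ell B x - (2 - K) * t \<le> 1)"
        then show "(\<forall>a\<in>W. 0 \<le> representation B x a) \<and>
          (\<forall>a\<in>W. 0 \<le> representation B x a + t * k a) \<and> ell B x \<le> 1 \<and> ell B x - (2 - K) * t \<le> 1"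
        proof
          assume h1: "0 \<le> t \<and> (\<forall>a\<in>W. 0 \<le> representation B x a) \<and> ell B x \<le> 1"
          have "\<forall>a\<in>W. 0 \<le> representation B x a + t * k a" using h1 a1 by (simp add: add_nonneg_nonneg)
          moreover have "ell B x - (2 - K) * t \<le> 1" using h1 a2 by linarith
          ultimately show ?thesis using h1 by simp
        next
          assume h2: "t \<le> 0 \<and> (\<forall>a\<in>W. 0 \<le> representation B x a + t * k a) \<and> ell B x - (2 - K) * t \<le> 1"
          then have t0: "t = 0" using True by simp
          show ?thesis using h2 t0 by simp
        qed
      next
        assume "(\<forall>a\<in>W. 0 \<le> representation B x a) \<and>
          (\<forall>a\<in>W. 0 \<le> representation B x a + t * k a) \<and> ell B x \<le> 1 \<and> ell B x - (2 - K) * t \<le> 1"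
        then show "(0 \<le> t \<and> (\<forall>a\<in>W. 0 \<le> representation B x a) \<and> ell B x \<le> 1) \<or>
          (t \<le> 0 \<and> (\<forall>a\<in>W. 0 \<le> representation B x a + t * k a) \<and> ell B x - (2 - K) * t \<le> 1)"
          using True by simp
      qed
    next
      case False
      have a1: "t * k a \<le> 0" if "a \<in> W" for a using False k0 that by (simp add: mult_nonpos_nonneg)
      have a2: "(2 - K) * t \<le> 0" using False K2' by (simp add: mult_nonneg_nonpos)
      show ?thesis unfolding Un_iff mA mC mD
      proof
        assume h: "(0 \<le> t \<and> (\<forall>a\<in>W. 0 \<le> representation B x a) \<and> ell B x \<le> 1) \<or>
          (t \<le> 0 \<and> (\<forall>a\<in>W. 0 \<le> representation B x a + t * k a) \<and> ell B x - (2 - K) * t \<le> 1)"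
        then have h2: "(\<forall>a\<in>W. 0 \<le> representation B x a + t * k a) \<and> ell B x - (2 - K) * t \<le> 1"
          using False by simp
        have "\<forall>a\<in>W. 0 \<le> representation B x a"
        proof
          fix a assume "a \<in> W"
          then show "0 \<le> representation B x a" using h2 a1[of a] by force
        qed
        moreover have "ell B x \<le> 1" using h2 a2 by linarith
        ultimately show "(\<forall>a\<in>W. 0 \<le> representation B x a) \<and>
          (\<forall>a\<in>W. 0 \<le> representation B x a + t * k a) \<and> ell B x \<le> 1 \<and> ell B x - (2 - K) * t \<le> 1"
          using h2 by simp
      next
        assume "(\<forall>a\<in>W. 0 \<le> representation B x a) \<and>
          (\<forall>a\<in>W. 0 \<le> representation B x a + t * k a) \<and> ell B x \<le> 1 \<and> ell B x - (2 - K) * t \<le> 1"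
        then show "(0 \<le> t \<and> (\<forall>a\<in>W. 0 \<le> representation B x a) \<and> ell B x \<le> 1) \<or>
          (t \<le> 0 \<and> (\<forall>a\<in>W. 0 \<le> representation B x a + t * k a) \<and> ell B x - (2 - K) * t \<le> 1)"
          using False by simp
      qed
    qed
  qed
  show ?thesis using cD eq by simp
qed

lemma crit_mid:
  assumes bB: "bas (insert u W)" and bB': "bas (insert u' W)" and uW: "u \<notin> W" "u' \<notin> W"
    and u'eq: "u' = - u + (\<Sum>a\<in>W. k a *\<^sub>R a)"
    and m: "(1/2) *\<^sub>R (u + u') \<in> convex hull (insert 0 (insert u W)) \<union> convex hull (insert 0 (insert u' W))"
  shows "(\<forall>a\<in>W. 0 \<le> k a) \<and> sum k W \<le> 2"
proof -
  define B where "B = insert u W"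
  have bB0: "bas B" using bB by (simp add: B_def)
  have fW: "finite W" using bB by (auto simp: bas_def)
  have WB: "W \<subseteq> B" by (auto simp: B_def)
  have meq: "(1/2) *\<^sub>R (u + u') = (\<Sum>a\<in>W. (k a / 2) *\<^sub>R a)"
    by (simp add: u'eq scaleR_sum_right)
  have ru: "representation B ((1/2) *\<^sub>R (u + u')) u = 0"
    unfolding meq using rep_of_sum_gen[OF bB0 WB, of u] uW by (simp add: B_def)
  have ra: "representation B ((1/2) *\<^sub>R (u + u')) a = k a / 2" if "a \<in> W" for a
    unfolding meq using rep_of_sum_gen[OF bB0 WB, of a] that by (simp add: B_def)
  have el: "ell B ((1/2) *\<^sub>R (u + u')) = sum k W / 2"
  proof -
    have "ell B ((1/2) *\<^sub>R (u + u')) = representation B ((1/2) *\<^sub>R (u + u')) u +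
        (\<Sum>a\<in>W. representation B ((1/2) *\<^sub>R (u + u')) a)"
      unfolding ell_def B_def using fW uW by simp
    also have "(\<Sum>a\<in>W. representation B ((1/2) *\<^sub>R (u + u')) a) = (\<Sum>a\<in>W. k a / 2)"
      using ra by (intro sum.cong) auto
    also have "(\<Sum>a\<in>W. k a / 2) = sum k W / 2" by (simp add: sum_divide_distrib)
    finally show ?thesis using ru by simp
  qed
  define mm where "mm = (1/2) *\<^sub>R (u + u')"
  have cond: "(\<forall>a\<in>W. 0 \<le> k a) \<and> sum k W \<le> 2"
    if h1: "\<forall>a\<in>W. 0 \<le> representation B mm a" and h2: "ell B mm \<le> 1"
  proof
    show "\<forall>a\<in>W. 0 \<le> k a"
    proof
      fix a assume aW: "a \<in> W"
      have "0 \<le> representation B mm a" using h1 aW by blast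
      then have "0 \<le> k a / 2" using ra[OF aW] by (simp add: mm_def)
      then show "0 \<le> k a" by simp
    qed
    show "sum k W \<le> 2" using h2 el by (simp add: mm_def)
  qed
  from m[folded mm_def] show ?thesis
  proof
    assume "mm \<in> convex hull (insert 0 (insert u W))"
    then have "(\<forall>a\<in>W. 0 \<le> representation B mm a) \<and> ell B mm \<le> 1"
      using memA[OF bB, of mm] by (simp add: B_def)
    then show ?thesis using cond by blast
  next
    assume "mm \<in> convex hull (insert 0 (insert u' W))"
    then have "(\<forall>a\<in>W. 0 \<le> representation B mm a + representation B mm u * k a) \<and>
       ell B mm - (2 - sum k W) * representation B mm u \<le> 1"
      using memC[OF assms(1-5), of mm] by (simp add: B_def)
    then have "(\<forall>a\<in>W. 0 \<le> representation B mm a) \<and> ell B mm \<le> 1"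
      using ru by (simp add: mm_def)
    then show ?thesis using cond by blast
  qed
qed

definition pcw :: "(real^'n) set \<Rightarrow> real^'n \<Rightarrow> real^'n \<Rightarrow> bool" where
  "pcw W u u' \<longleftrightarrow> u + u' = 0 \<or> (\<exists>a\<in>W. u + u' = a) \<or> (\<exists>a\<in>W. \<exists>b\<in>W. u + u' = a + b)"

lemma remove_one:
  assumes "finite W" "a \<in> W"
  shows "(\<Sum>x\<in>W. (k x - (if x = a then 1 else 0)) *\<^sub>R x) = (\<Sum>x\<in>W. k x *\<^sub>R x) - (a :: real^'n)"
    "sum (\<lambda>x. k x - (if x = a then 1 else 0)) W = sum k W - (1::real)"
proof -
  have "(\<Sum>x\<in>W. (k x - (if x = a then 1 else 0)) *\<^sub>R x) =
      (\<Sum>x\<in>W. k x *\<^sub>R x) - (\<Sum>x\<in>W. (if x = a then 1 else 0) *\<^sub>R x)"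
    by (simp add: scaleR_left_diff_distrib sum_subtractf)
  also have "(\<Sum>x\<in>W. (if x = a then 1 else 0) *\<^sub>R x) = (\<Sum>x\<in>W. if x = a then x else 0)"
    by (rule sum.cong) auto
  also have "\<dots> = a" using assms by simp
  finally show "(\<Sum>x\<in>W. (k x - (if x = a then 1 else 0)) *\<^sub>R x) = (\<Sum>x\<in>W. k x *\<^sub>R x) - a" .
  show "sum (\<lambda>x. k x - (if x = a then 1 else 0)) W = sum k W - 1"
    using assms by (simp add: sum_subtractf)
qed

lemma small_sum:
  fixes W :: "(real^'n) set"
  assumes fW: "finite W" and kI: "\<forall>a\<in>W. k a \<in> \<int>" and k0: "\<forall>a\<in>W. 0 \<le> k a" and K2: "sum k W \<le> 2"
  shows "(\<Sum>a\<in>W. k a *\<^sub>R a) = 0 \<or> (\<exists>a\<in>W. (\<Sum>a\<in>W. k a *\<^sub>R a) = a) \<or>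
    (\<exists>a\<in>W. \<exists>b\<in>W. (\<Sum>a\<in>W. k a *\<^sub>R a) = a + b)"
proof (cases "\<forall>a\<in>W. k a = 0")
  case True then show ?thesis by simp
next
  case False
  then obtain a where aW: "a \<in> W" and ka: "k a \<noteq> 0" by blast
  have ka1: "1 \<le> k a" using int_pos_ge1[of "k a"] kI k0 ka aW by force
  define k1 where "k1 x = k x - (if x = a then 1 else 0)" for x
  note r1 = remove_one[OF fW aW, of k, folded k1_def]
  have k1I: "\<forall>x\<in>W. k1 x \<in> \<int>" using kI by (auto simp: k1_def)
  have k10: "\<forall>x\<in>W. 0 \<le> k1 x" using k0 ka1 by (auto simp: k1_def)
  show ?thesis
  proof (cases "\<forall>x\<in>W. k1 x = 0")
    case True
    then have "(\<Sum>x\<in>W. k1 x *\<^sub>R x) = 0" by simp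
    then have "(\<Sum>a\<in>W. k a *\<^sub>R a) = a" using r1(1) by simp
    then show ?thesis using aW by blast
  next
    case False
    then obtain b where bW: "b \<in> W" and kb: "k1 b \<noteq> 0" by blast
    have kb1: "1 \<le> k1 b" using int_pos_ge1[of "k1 b"] k1I k10 kb bW by force
    define k2 where "k2 x = k1 x - (if x = b then 1 else 0)" for x
    note r2 = remove_one[OF fW bW, of k1, folded k2_def]
    have k20: "\<forall>x\<in>W. 0 \<le> k2 x" using k10 kb1 by (auto simp: k2_def)
    have "sum k2 W \<le> 0" using r1(2) r2(2) K2 by simp
    moreover have "0 \<le> sum k2 W" using k20 by (simp add: sum_nonneg)
    ultimately have "sum k2 W = 0" by simp
    then have "\<forall>x\<in>W. k2 x = 0" using sum_nonneg_eq_0_iff[OF fW] k20 by blast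
    then have "(\<Sum>x\<in>W. k2 x *\<^sub>R x) = 0" by simp
    then have "(\<Sum>a\<in>W. k a *\<^sub>R a) = a + b" using r1(1) r2(1) by (simp add: algebra_simps)
    then show ?thesis using aW bW by blast
  qed
qed

lemma pres_facts:
  fixes \<Sigma> :: "(real^'n) set set"
  assumes F: "fan \<Sigma>" "nonsingular \<Sigma>" and P: "adjacent_pres \<Sigma> \<sigma> \<tau> W u u'"
  shows "bas (insert u W)" "bas (insert u' W)" "u \<notin> W" "u' \<notin> W"
    "u' = - u + (\<Sum>a\<in>W. representation (insert u W) u' a *\<^sub>R a)"
    "\<forall>a\<in>W. representation (insert u W) u' a \<in> \<int>"
    "unit_part \<sigma> = convex hull (insert 0 (insert u W))"
    "unit_part \<tau> = convex hull (insert 0 (insert u' W))"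
    "basis_of \<sigma> = insert u W" "basis_of \<tau> = insert u' W"
    "\<sigma> \<in> top_cones \<Sigma>" "\<tau> \<in> top_cones \<Sigma>"
proof -
  note pp = adj_pres_props[OF P]
  show bB: "bas (insert u W)" and bB': "bas (insert u' W)" using pp Zbasis_bas by auto
  show "u \<notin> W" "u' \<notin> W" using pp by auto
  have fW: "finite W" using bB by (auto simp: bas_def)
  have "u' = (\<Sum>b\<in>insert u W. representation (insert u W) u' b *\<^sub>R b)" using rep_sum[OF bB] by simp
  also have "\<dots> = representation (insert u W) u' u *\<^sub>R u + (\<Sum>a\<in>W. representation (insert u W) u' a *\<^sub>R a)"
    using fW pp(3) by simp
  finally show "u' = - u + (\<Sum>a\<in>W. representation (insert u W) u' a *\<^sub>R a)"
    using coef_minus1[OF F P] by simp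
  show "\<forall>a\<in>W. representation (insert u W) u' a \<in> \<int>"
    using lattice_rep_int[OF pp(1) Zbasis_bas(4)[OF pp(2)]] by auto
  show s: "\<sigma> \<in> top_cones \<Sigma>" and t: "\<tau> \<in> top_cones \<Sigma>" using pp(7) by (auto simp: adjacent_def)
  show b1: "basis_of \<sigma> = insert u W" using basis_of_unique[OF pp(1) pp(5)] .
  show b2: "basis_of \<tau> = insert u' W" using basis_of_unique[OF pp(2) pp(6)] .
  show "unit_part \<sigma> = convex hull (insert 0 (insert u W))" using unit_part_eq[OF F s] b1 by simp
  show "unit_part \<tau> = convex hull (insert 0 (insert u' W))" using unit_part_eq[OF F t] b2 by simp
qed

lemma pcw_iff:
  assumes bB: "bas (insert u W)" and uW: "u \<notin> W"
    and u'eq: "u' = - u + (\<Sum>a\<in>W. k a *\<^sub>R a)" and kI: "\<forall>a\<in>W. k a \<in> \<int>"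
  shows "pcw W u u' \<longleftrightarrow> (\<forall>a\<in>W. 0 \<le> k a) \<and> sum k W \<le> 2"
proof
  assume "(\<forall>a\<in>W. 0 \<le> k a) \<and> sum k W \<le> 2"
  moreover have "finite W" using bB by (auto simp: bas_def)
  ultimately show "pcw W u u'" using small_sum[of W k] kI u'eq by (simp add: pcw_def)
next
  assume pc: "pcw W u u'"
  define B where "B = insert u W"
  have bB0: "bas B" using bB by (simp add: B_def)
  have fW: "finite W" using bB by (auto simp: bas_def)
  have WB: "W \<subseteq> B" by (auto simp: B_def)
  have w: "u + u' = (\<Sum>a\<in>W. k a *\<^sub>R a)" using u'eq by simp
  have kr: "k a = representation B (u + u') a" if "a \<in> W" for a
    using rep_of_sum_gen[OF bB0 WB, of a k] that w by (simp add: B_def)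
  have rb: "representation B v a = (if a = v then 1 else 0)" if "a \<in> W" "v \<in> W" for a v
  proof -
    have "a \<in> B" "v \<in> B" using that WB by auto
    then show ?thesis using rep_basis[OF bB0] by blast
  qed
  from pc show "(\<forall>a\<in>W. 0 \<le> k a) \<and> sum k W \<le> 2" unfolding pcw_def
  proof (elim disjE bexE)
    assume "u + u' = 0"
    then have "\<forall>a\<in>W. k a = 0" using kr by (simp add: rep_zero)
    then show ?thesis by simp
  next
    fix a0 assume a0: "a0 \<in> W" "u + u' = a0"
    then have kk: "\<forall>a\<in>W. k a = (if a = a0 then 1 else 0)" using kr rb by auto
    have "sum k W = (\<Sum>a\<in>W. if a = a0 then 1 else 0)" using kk by (intro sum.cong) auto
    also have "\<dots> = 1" using a0 fW by simp
    finally show ?thesis using kk by simp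
  next
    fix a0 b0 assume a0: "a0 \<in> W" "b0 \<in> W" "u + u' = a0 + b0"
    then have kk: "\<forall>a\<in>W. k a = (if a = a0 then 1 else 0) + (if a = b0 then 1 else 0)"
      using kr rb by (auto simp: rep_add[OF bB0])
    have "sum k W = (\<Sum>a\<in>W. (if a = a0 then 1 else 0) + (if a = b0 then (1::real) else 0))"
      using kk by (intro sum.cong) auto
    also have "\<dots> = 2" using a0 fW by (simp add: sum.distrib)
    finally show ?thesis using kk by simp
  qed
qed

lemma pres_pcw_iff_convex:
  fixes \<Sigma> :: "(real^'n) set set"
  assumes F: "fan \<Sigma>" "nonsingular \<Sigma>" and P: "adjacent_pres \<Sigma> \<sigma> \<tau> W u u'"
  shows "pcw W u u' \<longleftrightarrow> convex (unit_part \<sigma> \<union> unit_part \<tau>)"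
proof -
  note pf = pres_facts[OF F P]
  define k where "k a = representation (insert u W) u' a" for a
  have u'eq: "u' = - u + (\<Sum>a\<in>W. k a *\<^sub>R a)" using pf(5) by (simp add: k_def)
  have kI: "\<forall>a\<in>W. k a \<in> \<int>" using pf(6) by (simp add: k_def)
  note pi = pcw_iff[OF pf(1) pf(3) u'eq kI]
  show ?thesis
  proof
    assume "pcw W u u'"
    then have "(\<forall>a\<in>W. 0 \<le> k a) \<and> sum k W \<le> 2" using pi by simp
    then show "convex (unit_part \<sigma> \<union> unit_part \<tau>)"
      using crit_convex[OF pf(1-4) u'eq] pf(7,8) by simp
  next
    assume cv: "convex (unit_part \<sigma> \<union> unit_part \<tau>)"
    have "u \<in> unit_part \<sigma>" using pf(7) by (simp add: hull_inc)
    moreover have "u' \<in> unit_part \<tau>" using pf(8) by (simp add: hull_inc)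
    ultimately have "(1/2) *\<^sub>R u + (1/2) *\<^sub>R u' \<in> unit_part \<sigma> \<union> unit_part \<tau>"
      using convexD[OF cv, of u u' "1/2" "1/2"] by simp
    then have "(1/2) *\<^sub>R (u + u') \<in> convex hull (insert 0 (insert u W)) \<union> convex hull (insert 0 (insert u' W))"
      using pf(7,8) by (simp add: scaleR_add_right)
    then have "(\<forall>a\<in>W. 0 \<le> k a) \<and> sum k W \<le> 2" using crit_mid[OF pf(1-4) u'eq] by simp
    then show "pcw W u u'" using pi by simp
  qed
qed

lemma pres_mid:
  fixes \<Sigma> :: "(real^'n) set set"
  assumes F: "fan \<Sigma>" "nonsingular \<Sigma>" and P: "adjacent_pres \<Sigma> \<sigma> \<tau> W u u'"
    and m: "(1/2) *\<^sub>R (u + u') \<in> unit_part \<sigma>"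
  shows "pcw W u u'"
proof -
  note pf = pres_facts[OF F P]
  define k where "k a = representation (insert u W) u' a" for a
  have u'eq: "u' = - u + (\<Sum>a\<in>W. k a *\<^sub>R a)" using pf(5) by (simp add: k_def)
  have kI: "\<forall>a\<in>W. k a \<in> \<int>" using pf(6) by (simp add: k_def)
  have "(1/2) *\<^sub>R (u + u') \<in> convex hull (insert 0 (insert u W)) \<union> convex hull (insert 0 (insert u' W))"
    using m pf(7) by simp
  then have "(\<forall>a\<in>W. 0 \<le> k a) \<and> sum k W \<le> 2" using crit_mid[OF pf(1-4) u'eq] by simp
  then show "pcw W u u'" using pcw_iff[OF pf(1) pf(3) u'eq kI] by simp
qed

lemma pairwise_convex_pcw: "pairwise_convex \<Sigma> \<longleftrightarrow> (\<forall>\<sigma> \<tau> W u u'. adjacent_pres \<Sigma> \<sigma> \<tau> W u u' \<longrightarrow> pcw W u u')"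
  by (simp add: pairwise_convex_def pcw_def)

lemma part1:
  fixes \<Sigma> :: "(real^'n) set set"
  assumes F: "fan \<Sigma>" "nonsingular \<Sigma>"
  shows "pairwise_convex \<Sigma> \<longleftrightarrow> (\<forall>\<sigma> \<tau>. adjacent \<Sigma> \<sigma> \<tau> \<longrightarrow> convex (unit_part \<sigma> \<union> unit_part \<tau>))"
proof
  assume pc: "pairwise_convex \<Sigma>"
  show "\<forall>\<sigma> \<tau>. adjacent \<Sigma> \<sigma> \<tau> \<longrightarrow> convex (unit_part \<sigma> \<union> unit_part \<tau>)"
  proof (intro allI impI)
    fix \<sigma> \<tau> assume "adjacent \<Sigma> \<sigma> \<tau>"
    then obtain W u u' where P: "adjacent_pres \<Sigma> \<sigma> \<tau> W u u'" using adj_pres[OF F] by blast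
    then have "pcw W u u'" using pc pairwise_convex_pcw by blast
    then show "convex (unit_part \<sigma> \<union> unit_part \<tau>)" using pres_pcw_iff_convex[OF F P] by simp
  qed
next
  assume h: "\<forall>\<sigma> \<tau>. adjacent \<Sigma> \<sigma> \<tau> \<longrightarrow> convex (unit_part \<sigma> \<union> unit_part \<tau>)"
  show "pairwise_convex \<Sigma>" unfolding pairwise_convex_pcw
  proof (intro allI impI)
    fix \<sigma> \<tau> W u u' assume P: "adjacent_pres \<Sigma> \<sigma> \<tau> W u u'"
    have "adjacent \<Sigma> \<sigma> \<tau>" using adj_pres_props(7)[OF P] .
    then show "pcw W u u'" using h pres_pcw_iff_convex[OF F P] by blast
  qed
qed

lemma pc_pos:
  fixes \<Sigma> :: "(real^'n) set set"
  assumes F: "fan \<Sigma>" "nonsingular \<Sigma>" and pc: "pairwise_convex \<Sigma>"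
  shows "pairwise_positive \<Sigma>"
  unfolding pairwise_positive_def
proof (intro allI impI)
  fix \<sigma> \<tau> W u u' assume P: "adjacent_pres \<Sigma> \<sigma> \<tau> W u u'"
  note pf = pres_facts[OF F P]
  have WB: "W \<subseteq> insert u W" by auto
  have "pcw W u u'" using pc pairwise_convex_pcw P by blast
  then show "u + u' \<in> cone_gen W" unfolding pcw_def
  proof (elim disjE bexE)
    assume "u + u' = 0" then show ?thesis by (simp add: zero_in_cone_gen)
  next
    fix a assume "a \<in> W" "u + u' = a" then show ?thesis using gen_in_cone_gen[OF pf(1) WB] by simp
  next
    fix a b assume "a \<in> W" "b \<in> W" "u + u' = a + b"
    then show ?thesis using gen_in_cone_gen[OF pf(1) WB] cone_gen_add[OF pf(1) WB] by simp
  qed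
qed

lemma cross:
  fixes \<Sigma> :: "(real^'n) set set"
  assumes F: "fan \<Sigma>" "nonsingular \<Sigma>" and r: "\<rho> \<in> top_cones \<Sigma>" and s: "\<sigma> \<in> top_cones \<Sigma>"
    and m1: "m \<in> unit_part \<rho>" and m2: "m \<in> \<sigma>"
  shows "m \<in> unit_part \<sigma>"
proof -
  have rS: "\<rho> \<in> \<Sigma>" and sS: "\<sigma> \<in> \<Sigma>" using r s by (auto simp: top_cones_def)
  define Br where "Br = basis_of \<rho>"
  define Bs where "Bs = basis_of \<sigma>"
  have ZBr: "Zbasis Br" "\<rho> = cone_gen Br" using basis_of[OF F r] by (auto simp: Br_def)
  have ZBs: "Zbasis Bs" "\<sigma> = cone_gen Bs" using basis_of[OF F s] by (auto simp: Bs_def)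
  define S where "S = {b \<in> Br. b \<in> \<rho> \<inter> \<sigma>}"
  define S2 where "S2 = {b \<in> Bs. b \<in> \<sigma> \<inter> \<rho>}"
  have e1: "\<rho> \<inter> \<sigma> = cone_gen S" unfolding S_def Br_def by (rule inter_face_gen[OF F r sS])
  have e2: "\<sigma> \<inter> \<rho> = cone_gen S2" unfolding S2_def Bs_def by (rule inter_face_gen[OF F s rS])
  have SB: "S \<subseteq> Br" and S2B: "S2 \<subseteq> Bs" by (auto simp: S_def S2_def)
  have SS: "S = S2" using gen_unique[OF ZBr(1) ZBs(1) SB S2B] e1 e2 by (simp add: Int_commute)
  have bBr: "bas Br" using Zbasis_bas[OF ZBr(1)] by simp
  have mu: "m \<in> convex hull (insert 0 Br)" using m1 unit_part_eq[OF F r] by (simp add: Br_def)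
  have mr: "m \<in> \<rho>" using mu hull_rep[OF bBr order_refl] cone_gen_rep[OF bBr order_refl] ZBr(2) by auto
  have mc: "m \<in> cone_gen S" using e1 mr m2 by auto
  have "m \<in> convex hull (insert 0 S)"
    using mu mc hull_rep[OF bBr order_refl] hull_rep[OF bBr SB] cone_gen_rep[OF bBr SB] by auto
  also have "\<dots> \<subseteq> convex hull (insert 0 Bs)" using SS S2B by (intro hull_mono) auto
  finally show ?thesis using unit_part_eq[OF F s] by (simp add: Bs_def)
qed

lemma unit_sub_fan_polytope: "\<sigma> \<in> top_cones \<Sigma> \<Longrightarrow> unit_part \<sigma> \<subseteq> fan_polytope \<Sigma>"
  by (auto simp: fan_polytope_def)

lemma part2_back:
  fixes \<Sigma> :: "(real^'n) set set"
  assumes F: "fan \<Sigma>" "nonsingular \<Sigma>" and pp: "pairwise_positive \<Sigma>" and cv: "convex (fan_polytope \<Sigma>)"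
  shows "pairwise_convex \<Sigma>"
  unfolding pairwise_convex_pcw
proof (intro allI impI)
  fix \<sigma> \<tau> W u u' assume P: "adjacent_pres \<Sigma> \<sigma> \<tau> W u u'"
  note pf = pres_facts[OF F P]
  have "u \<in> unit_part \<sigma>" using pf(7) by (simp add: hull_inc)
  then have u: "u \<in> fan_polytope \<Sigma>" using unit_sub_fan_polytope[OF pf(11)] by blast
  have "u' \<in> unit_part \<tau>" using pf(8) by (simp add: hull_inc)
  then have u': "u' \<in> fan_polytope \<Sigma>" using unit_sub_fan_polytope[OF pf(12)] by blast
  have "(1/2) *\<^sub>R u + (1/2) *\<^sub>R u' \<in> fan_polytope \<Sigma>" using convexD[OF cv u u', of "1/2" "1/2"] by simp
  then have mP: "(1/2) *\<^sub>R (u + u') \<in> fan_polytope \<Sigma>" by (simp add: scaleR_add_right)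
  then obtain \<rho> where r: "\<rho> \<in> top_cones \<Sigma>" and mr: "(1/2) *\<^sub>R (u + u') \<in> unit_part \<rho>"
    by (auto simp: fan_polytope_def)
  have WB: "W \<subseteq> insert u W" by auto
  have "u + u' \<in> cone_gen W" using pp P by (auto simp: pairwise_positive_def)
  then have "(1/2) *\<^sub>R (u + u') \<in> cone_gen W" using cone_gen_scale[OF pf(1) WB] by simp
  then have "(1/2) *\<^sub>R (u + u') \<in> \<sigma>"
    using cone_gen_rep[OF pf(1) WB] cone_gen_rep[OF pf(1) order_refl] adj_pres_props(5)[OF P] by auto
  then have "(1/2) *\<^sub>R (u + u') \<in> unit_part \<sigma>" using cross[OF F r pf(11) mr] by simp
  then show "pcw W u u'" using pres_mid[OF F P] by simp
qed

lemma closed_cone_gen: "bas B \<Longrightarrow> closed (cone_gen B)"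
proof -
  assume bB: "bas B"
  have "cone_gen B = (\<Inter>b\<in>B. {x. 0 \<le> representation B x b})"
    using cone_gen_rep[OF bB order_refl] by auto
  moreover have "closed (\<Inter>b\<in>B. {x. 0 \<le> representation B x b})"
    by (intro closed_INT ballI closed_Collect_le continuous_on_const rep_continuous[OF bB])
  ultimately show ?thesis by simp
qed

lemma unit_part_char:
  fixes \<Sigma> :: "(real^'n) set set"
  assumes F: "fan \<Sigma>" "nonsingular \<Sigma>" and r: "\<rho> \<in> top_cones \<Sigma>"
  shows "x \<in> unit_part \<rho> \<longleftrightarrow> x \<in> \<rho> \<and> ell (basis_of \<rho>) x \<le> 1"
proof -
  have Z: "Zbasis (basis_of \<rho>)" "\<rho> = cone_gen (basis_of \<rho>)" using basis_of[OF F r] by auto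
  have bB: "bas (basis_of \<rho>)" using Zbasis_bas[OF Z(1)] by simp
  show ?thesis
    using unit_part_eq[OF F r] hull_rep[OF bB order_refl] cone_gen_rep[OF bB order_refl] Z(2)
    by auto
qed

lemma top_closed:
  fixes \<Sigma> :: "(real^'n) set set"
  assumes F: "fan \<Sigma>" "nonsingular \<Sigma>" and r: "\<rho> \<in> top_cones \<Sigma>"
  shows "closed \<rho>"
  using basis_of[OF F r] closed_cone_gen Zbasis_bas by metis

lemma cover:
  fixes \<Sigma> :: "(real^'n) set set"
  assumes F: "fan \<Sigma>" "nonsingular \<Sigma>" and fin: "finite \<Sigma>" and C: "complete_fan \<Sigma>"
  shows "\<exists>\<rho>\<in>top_cones \<Sigma>. x \<in> \<rho>"
proof -
  obtain \<tau> where tS: "\<tau> \<in> \<Sigma>" and xt: "x \<in> \<tau>" using C by (auto simp: complete_fan_def)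
  define A where "A = {\<tau>' \<in> \<Sigma>. \<tau> \<subseteq> \<tau>'}"
  have fA: "finite A" using fin by (simp add: A_def)
  have nA: "A \<noteq> {}" using tS by (auto simp: A_def)
  obtain m where mA: "m \<in> A" and mmax: "\<forall>b\<in>A. m \<le> b \<longrightarrow> m = b" using finite_has_maximal[OF fA nA] by blast
  have "maximal_cone \<Sigma> m"
    unfolding maximal_cone_def
  proof
    show "m \<in> \<Sigma>" using mA by (simp add: A_def)
    show "\<not> (\<exists>\<tau>'\<in>\<Sigma>. m \<subset> \<tau>')"
    proof
      assume "\<exists>\<tau>'\<in>\<Sigma>. m \<subset> \<tau>'"
      then obtain \<tau>' where "\<tau>' \<in> \<Sigma>" "m \<subset> \<tau>'" by blast
      moreover then have "\<tau>' \<in> A" using mA by (auto simp: A_def)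
      ultimately show False using mmax by auto
    qed
  qed
  then obtain B where ZB: "Zbasis B" "m = cone_gen B" using F(2) by (auto simp: nonsingular_def)
  have "dim m = CARD('n)"
    using dim_cone_gen[OF Zbasis_bas(1)[OF ZB(1)] order_refl] Zbasis_bas(2)[OF ZB(1)] ZB(2) by simp
  then have "m \<in> top_cones \<Sigma>" using mA by (auto simp: top_cones_def A_def)
  moreover have "x \<in> m" using mA xt by (auto simp: A_def)
  ultimately show ?thesis by blast
qed

lemma loc:
  fixes \<Sigma> :: "(real^'n) set set"
  assumes F: "fan \<Sigma>" "nonsingular \<Sigma>" and pc: "pairwise_convex \<Sigma>" and adj: "adjacent \<Sigma> \<rho> \<tau>"
    and x: "x \<in> \<tau>"
  shows "ell (basis_of \<rho>) x \<le> ell (basis_of \<tau>) x"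
proof -
  obtain W u u' where P: "adjacent_pres \<Sigma> \<rho> \<tau> W u u'" using adj_pres[OF F adj] by blast
  note pf = pres_facts[OF F P]
  define k where "k a = representation (insert u W) u' a" for a
  have u'eq: "u' = - u + (\<Sum>a\<in>W. k a *\<^sub>R a)" using pf(5) by (simp add: k_def)
  have kI: "\<forall>a\<in>W. k a \<in> \<int>" using pf(6) by (simp add: k_def)
  have "pcw W u u'" using pc pairwise_convex_pcw P by blast
  then have K2: "sum k W \<le> 2" using pcw_iff[OF pf(1) pf(3) u'eq kI] by simp
  have xt: "x \<in> cone_gen (insert u' W)" using x adj_pres_props(6)[OF P] by simp
  have t: "representation (insert u W) x u \<le> 0" using memC_cone[OF pf(1-4) u'eq xt] .
  have "ell (insert u' W) x = ell (insert u W) x - (2 - sum k W) * representation (insert u W) x u"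
    using change_basis(3)[OF pf(1-4) u'eq] .
  moreover have "(2 - sum k W) * representation (insert u W) x u \<le> 0"
    using K2 t by (simp add: mult_nonneg_nonpos)
  ultimately show ?thesis using pf(9,10) by simp
qed

context
  fixes \<Sigma> :: "(real^'n) set set" and \<sigma> :: "(real^'n) set"
  assumes F1: "fan \<Sigma>" and F2: "nonsingular \<Sigma>" and fin: "finite \<Sigma>" and CC: "complete_fan \<Sigma>"
    and pc: "pairwise_convex \<Sigma>" and s: "\<sigma> \<in> top_cones \<Sigma>"
begin

abbreviation yy where "yy \<equiv> (\<Sum>b\<in>basis_of \<sigma>. b)"

lemma bs: "Zbasis (basis_of \<sigma>)" "\<sigma> = cone_gen (basis_of \<sigma>)" "bas (basis_of \<sigma>)"
  using basis_of[OF F1 F2 s] Zbasis_bas by auto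

lemma rep_yy: "b \<in> basis_of \<sigma> \<Longrightarrow> representation (basis_of \<sigma>) yy b = 1"
  using rep_of_sum[OF bs(3), of b "\<lambda>_. 1"] by simp

lemma y_only:
  assumes r: "\<rho> \<in> top_cones \<Sigma>" and y: "yy \<in> \<rho>"
  shows "\<rho> = \<sigma>"
proof (rule ccontr)
  assume ne: "\<rho> \<noteq> \<sigma>"
  have rS: "\<rho> \<in> \<Sigma>" using r by (auto simp: top_cones_def)
  define S where "S = {b \<in> basis_of \<sigma>. b \<in> \<sigma> \<inter> \<rho>}"
  have e: "\<sigma> \<inter> \<rho> = cone_gen S" unfolding S_def by (rule inter_face_gen[OF F1 F2 s rS])
  have SB: "S \<subseteq> basis_of \<sigma>" by (auto simp: S_def)
  have ys: "yy \<in> \<sigma>" using bs(2) cone_gen_rep[OF bs(3) order_refl] rep_yy by auto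
  have "yy \<in> cone_gen S" using e ys y by auto
  then have "\<forall>b\<in>basis_of \<sigma> - S. representation (basis_of \<sigma>) yy b = 0"
    using cone_gen_rep[OF bs(3) SB] by auto
  then have "basis_of \<sigma> - S = {}" using rep_yy by force
  then have "S = basis_of \<sigma>" using SB by auto
  then have "\<sigma> \<inter> \<rho> = \<sigma>" using e bs(2) by simp
  then have "\<sigma> \<subset> \<rho>" using ne by auto
  then show False using top_cone_maximal[OF F1 s] rS by (auto simp: maximal_cone_def)
qed

abbreviation LL where "LL \<equiv> {C \<in> \<Sigma>. dim C + 2 \<le> CARD('n)}"
abbreviation NN where "NN \<equiv> \<Union>C\<in>LL. span (insert yy C)"

lemma NN_negl: "negligible NN"
proof (rule negligible_Union)
  show "finite ((\<lambda>C. span (insert yy C)) ` LL)" using fin by simp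
  fix T assume "T \<in> (\<lambda>C. span (insert yy C)) ` LL"
  then obtain C where C: "C \<in> LL" "T = span (insert yy C)" by blast
  have "dim T = dim (insert yy C)" using C(2) by (simp add: dim_span)
  also have "\<dots> \<le> dim C + 1" by (simp add: dim_insert)
  also have "\<dots> < CARD('n)" using C(1) by simp
  finally show "negligible T" by (intro negligible_lowdim) simp
qed

lemma avoid:
  assumes xN: "x \<notin> NN" and s0: "0 < t" and C: "C \<in> LL"
  shows "yy + t *\<^sub>R (x - yy) \<notin> C"
proof
  assume z: "yy + t *\<^sub>R (x - yy) \<in> C"
  have "x = yy + (1 / t) *\<^sub>R ((yy + t *\<^sub>R (x - yy)) - yy)" using s0 by simp
  also have "\<dots> \<in> span (insert yy C)"
    by (intro span_add span_scale span_diff span_base) (use z in auto)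
  finally have "x \<in> span (insert yy C)" .
  then have "x \<in> NN" by (rule UN_I[OF C])
  with xN show False by simp
qed

abbreviation zz where "zz x t \<equiv> yy + t *\<^sub>R (x - yy)"
abbreviation II where "II x \<rho> \<equiv> {t. 0 \<le> t \<and> t \<le> 1 \<and> zz x t \<in> \<rho>}"
abbreviation AA where "AA x \<rho> \<equiv> Inf (II x \<rho>)"

lemma zz_cont: "continuous_on UNIV (\<lambda>t. zz x t)"
  by (intro continuous_intros)

lemma closed_pre:
  assumes "closed R" shows "closed {t. 0 \<le> t \<and> t \<le> c \<and> zz x t \<in> R}"
proof -
  have "{t. 0 \<le> t \<and> t \<le> c \<and> zz x t \<in> R} = {0..c} \<inter> ((\<lambda>t. zz x t) -` R)" by auto
  moreover have "closed ((\<lambda>t. zz x t) -` R)" by (rule closed_vimage[OF assms zz_cont])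
  ultimately show ?thesis by (simp add: closed_Int)
qed

lemma II_props:
  assumes r: "\<rho> \<in> top_cones \<Sigma>" and ne: "II x \<rho> \<noteq> {}"
  shows "AA x \<rho> \<in> II x \<rho>" "\<And>t. t \<in> II x \<rho> \<Longrightarrow> AA x \<rho> \<le> t"
proof -
  have bdd: "bdd_below (II x \<rho>)" by (rule bdd_belowI[of _ 0]) auto
  have cl: "closed (II x \<rho>)" using closed_pre[OF top_closed[OF F1 F2 r], of 1 x] by simp
  show "AA x \<rho> \<in> II x \<rho>" using closed_contains_Inf[OF ne bdd cl] .
  show "\<And>t. t \<in> II x \<rho> \<Longrightarrow> AA x \<rho> \<le> t" by (rule cInf_lower[OF _ bdd])
qed

lemma ell_zz: "bas B \<Longrightarrow> ell B (zz x t) = ell B yy + t * ell B (x - yy)"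
  by (simp add: ell_add ell_scale)

lemma main_ind:
  assumes xN: "x \<notin> NN"
  shows "\<rho> \<in> top_cones \<Sigma> \<Longrightarrow> II x \<rho> \<noteq> {} \<Longrightarrow> AA x \<rho> \<le> t \<Longrightarrow>
     ell (basis_of \<sigma>) (zz x t) \<le> ell (basis_of \<rho>) (zz x t)"
proof (induction "card {\<tau>\<in>top_cones \<Sigma>. II x \<tau> \<noteq> {} \<and> AA x \<tau> < AA x \<rho>}" arbitrary: \<rho> t rule: less_induct)
  case less
  note r = less.prems(1)
  define a where "a = AA x \<rho>"
  have aI: "a \<in> II x \<rho>" and alow: "\<And>t. t \<in> II x \<rho> \<Longrightarrow> a \<le> t"
    using II_props[OF r less.prems(2)] by (auto simp: a_def)
  have rS: "\<rho> \<in> \<Sigma>" using r by (auto simp: top_cones_def)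
  show ?case
  proof (cases "a = 0")
    case True
    then have "yy \<in> \<rho>" using aI by simp
    then have "\<rho> = \<sigma>" by (rule y_only[OF r])
    then show ?thesis by simp
  next
    case False
    then have a0: "0 < a" using aI by simp
    have a1: "a \<le> 1" using aI by simp
    have notin: "zz x t' \<notin> \<rho>" if "0 \<le> t'" "t' < a" for t'
    proof
      assume "zz x t' \<in> \<rho>"
      then have "t' \<in> II x \<rho>" using that a1 by simp
      then show False using alow[of t'] that by simp
    qed
    define M where "M = {\<tau>\<in>top_cones \<Sigma>. \<exists>t'. 0 \<le> t' \<and> t' < a \<and> zz x t' \<in> \<tau>}"
    define J where "J \<tau> = {t'. 0 \<le> t' \<and> t' \<le> a \<and> zz x t' \<in> \<tau>}" for \<tau>
    have fT: "finite (top_cones \<Sigma>)" using fin by (simp add: top_cones_def)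
    have fM: "finite M" using fT by (simp add: M_def)
    have sub: "{0..<a} \<subseteq> (\<Union>\<tau>\<in>M. J \<tau>)"
    proof
      fix t' assume t': "t' \<in> {0..<a}"
      obtain \<tau> where \<tau>: "\<tau> \<in> top_cones \<Sigma>" "zz x t' \<in> \<tau>" using cover[OF F1 F2 fin CC] by blast
      then have "\<tau> \<in> M" using t' by (auto simp: M_def)
      moreover have "t' \<in> J \<tau>" using t' \<tau> by (auto simp: J_def)
      ultimately show "t' \<in> (\<Union>\<tau>\<in>M. J \<tau>)" by blast
    qed
    have clU: "closed (\<Union>\<tau>\<in>M. J \<tau>)"
    proof (rule closed_UN[OF fM], rule ballI)
      fix \<tau> assume "\<tau> \<in> M"
      then have "\<tau> \<in> top_cones \<Sigma>" by (simp add: M_def)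
      then show "closed (J \<tau>)" unfolding J_def by (rule closed_pre[OF top_closed[OF F1 F2]])
    qed
    have "a \<in> closure {0..<a}" using a0 by (simp add: closure_atLeastLessThan)
    also have "\<dots> \<subseteq> (\<Union>\<tau>\<in>M. J \<tau>)" by (rule closure_minimal[OF sub clU])
    finally obtain \<tau> where tM: "\<tau> \<in> M" and aJ: "a \<in> J \<tau>" by blast
    have t: "\<tau> \<in> top_cones \<Sigma>" using tM by (simp add: M_def)
    obtain s1 where s1: "0 \<le> s1" "s1 < a" "zz x s1 \<in> \<tau>" using tM by (auto simp: M_def)
    have za: "zz x a \<in> \<tau>" "zz x a \<in> \<rho>" using aJ aI by (auto simp: J_def)
    have tne: "\<tau> \<noteq> \<rho>" using notin[OF s1(1,2)] s1(3) by auto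
    have s1I: "s1 \<in> II x \<tau>" using s1 a1 by simp
    then have IIt: "II x \<tau> \<noteq> {}" by blast
    have at: "AA x \<tau> \<le> s1" using II_props(2)[OF t IIt s1I] .
    have card_lt: "card {\<tau>'\<in>top_cones \<Sigma>. II x \<tau>' \<noteq> {} \<and> AA x \<tau>' < AA x \<tau>}
        < card {\<tau>'\<in>top_cones \<Sigma>. II x \<tau>' \<noteq> {} \<and> AA x \<tau>' < AA x \<rho>}"
    proof (rule psubset_card_mono)
      show "finite {\<tau>'\<in>top_cones \<Sigma>. II x \<tau>' \<noteq> {} \<and> AA x \<tau>' < AA x \<rho>}" using fT by simp
      have "AA x \<tau> < AA x \<rho>" using at s1(2) by (simp add: a_def)
      then show "{\<tau>'\<in>top_cones \<Sigma>. II x \<tau>' \<noteq> {} \<and> AA x \<tau>' < AA x \<tau>}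
        \<subset> {\<tau>'\<in>top_cones \<Sigma>. II x \<tau>' \<noteq> {} \<and> AA x \<tau>' < AA x \<rho>}"
        using t IIt by auto
    qed
    have IH: "ell (basis_of \<sigma>) (zz x t') \<le> ell (basis_of \<tau>) (zz x t')" if "AA x \<tau> \<le> t'" for t'
      using less.hyps[OF card_lt t IIt that] .
    have tS: "\<tau> \<in> \<Sigma>" using t by (auto simp: top_cones_def)
    have fc: "(\<rho> \<inter> \<tau>) face_of \<rho>" using F1 rS tS by (auto simp: fan_def)
    have fcl: "\<forall>\<tau>'. \<tau>' face_of \<rho> \<and> \<tau>' \<noteq> {} \<longrightarrow> \<tau>' \<in> \<Sigma>" using F1 rS by (simp add: fan_def)
    have rtne: "\<rho> \<inter> \<tau> \<noteq> {}" using za by auto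
    have inS: "\<rho> \<inter> \<tau> \<in> \<Sigma>" by (rule fcl[rule_format], rule conjI, rule fc, rule rtne)
    have "\<rho> \<inter> \<tau> \<notin> LL" using avoid[OF xN a0, of "\<rho> \<inter> \<tau>"] za by auto
    then have d1: "CARD('n) < dim (\<rho> \<inter> \<tau>) + 2" using inS by auto
    have d2: "dim (\<rho> \<inter> \<tau>) < CARD('n)" using top_distinct_dim[OF F1 r t tne[symmetric]] .
    have adj: "adjacent \<Sigma> \<rho> \<tau>" using r t tne d1 d2 by (auto simp: adjacent_def)
    have adj': "adjacent \<Sigma> \<tau> \<rho>" using adjacent_sym[OF adj] .
    define Br where "Br = basis_of \<rho>"
    define Bt where "Bt = basis_of \<tau>"
    have bBr: "bas Br" using basis_of[OF F1 F2 r] Zbasis_bas by (auto simp: Br_def)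
    have bBt: "bas Bt" using basis_of[OF F1 F2 t] Zbasis_bas by (auto simp: Bt_def)
    define d0 where "d0 = ell Br yy - ell Bt yy"
    define d1' where "d1' = ell Br (x - yy) - ell Bt (x - yy)"
    have dz: "ell Br (zz x t') - ell Bt (zz x t') = d0 + t' * d1'" for t'
      using ell_zz[OF bBr] ell_zz[OF bBt] by (simp add: d0_def d1'_def algebra_simps)
    have da: "d0 + a * d1' = 0"
    proof -
      have "ell Bt (zz x a) \<le> ell Br (zz x a)" using loc[OF F1 F2 pc adj' za(2)] by (simp add: Br_def Bt_def)
      moreover have "ell Br (zz x a) \<le> ell Bt (zz x a)" using loc[OF F1 F2 pc adj za(1)] by (simp add: Br_def Bt_def)
      ultimately show ?thesis using dz[of a] by simp
    qed
    have ds1: "d0 + s1 * d1' \<le> 0"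
      using loc[OF F1 F2 pc adj s1(3)] dz[of s1] by (simp add: Br_def Bt_def)
    have "(a - s1) * d1' \<ge> 0" using da ds1 by (simp add: algebra_simps)
    then have d1p: "0 \<le> d1'" using s1(2) by (simp add: zero_le_mult_iff)
    have "a \<le> t" using less.prems(3) by (simp add: a_def)
    then have "0 \<le> d0 + t * d1'"
    proof -
      have "d0 + t * d1' = (d0 + a * d1') + (t - a) * d1'" by (simp add: algebra_simps)
      also have "\<dots> = (t - a) * d1'" using da by simp
      also have "\<dots> \<ge> 0" using \<open>a \<le> t\<close> d1p by simp
      finally show ?thesis .
    qed
    then have "ell Bt (zz x t) \<le> ell Br (zz x t)" using dz[of t] by simp
    moreover have "ell (basis_of \<sigma>) (zz x t) \<le> ell Bt (zz x t)"
      using IH[of t] at s1(2) \<open>a \<le> t\<close> by (simp add: Bt_def)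
    ultimately show ?thesis by (simp add: Br_def)
  qed
qed

lemma key_generic:
  assumes xN: "x \<notin> NN" and r: "\<rho> \<in> top_cones \<Sigma>" and x: "x \<in> \<rho>"
  shows "ell (basis_of \<sigma>) x \<le> ell (basis_of \<rho>) x"
proof -
  have z1: "zz x 1 = x" by simp
  have "1 \<in> II x \<rho>" using x by simp
  then have ne: "II x \<rho> \<noteq> {}" by blast
  have "AA x \<rho> \<le> 1" using II_props(2)[OF r ne \<open>1 \<in> II x \<rho>\<close>] .
  then have "ell (basis_of \<sigma>) (zz x 1) \<le> ell (basis_of \<rho>) (zz x 1)"
    using main_ind[OF xN r ne] by blast
  then show ?thesis using z1 by simp
qed

lemma key:
  assumes r: "\<rho> \<in> top_cones \<Sigma>" and x: "x \<in> \<rho>"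
  shows "ell (basis_of \<sigma>) x \<le> ell (basis_of \<rho>) x"
proof -
  define G where "G = {x. ell (basis_of \<sigma>) x \<le> ell (basis_of \<rho>) x}"
  have bBr: "bas (basis_of \<rho>)" using basis_of[OF F1 F2 r] Zbasis_bas by auto
  have clG: "closed G" unfolding G_def
    by (rule closed_Collect_le[OF ell_continuous[OF bs(3)] ell_continuous[OF bBr]])
  have sub1: "interior \<rho> \<inter> - NN \<subseteq> G"
  proof
    fix z assume "z \<in> interior \<rho> \<inter> - NN"
    then have "z \<in> \<rho>" "z \<notin> NN" using interior_subset by auto
    then have "ell (basis_of \<sigma>) z \<le> ell (basis_of \<rho>) z" using key_generic[OF _ r] by blast
    then show "z \<in> G" unfolding G_def by simp
  qed
  have "negligible (interior NN)" by (rule negligible_subset[OF NN_negl interior_subset])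
  have iN: "interior NN = {}"
  proof (rule ccontr)
    assume "interior NN \<noteq> {}"
    then have "\<not> negligible (interior NN)" by (rule open_not_negligible[OF open_interior])
    with \<open>negligible (interior NN)\<close> show False by simp
  qed
  have cN: "closure (- NN) = UNIV" using closure_complement[of NN] iN by simp
  have "interior \<rho> \<subseteq> closure (interior \<rho> \<inter> - NN)"
    using open_Int_closure_subset[OF open_interior, of \<rho> "- NN"] cN by simp
  then have "closure (interior \<rho>) \<subseteq> closure (closure (interior \<rho> \<inter> - NN))"
    by (rule closure_mono)
  then have "closure (interior \<rho>) \<subseteq> closure (interior \<rho> \<inter> - NN)" by simp
  also have "\<dots> \<subseteq> G" by (rule closure_minimal[OF sub1 clG])
  finally have cG: "closure (interior \<rho>) \<subseteq> G" .
  have rS: "\<rho> \<in> \<Sigma>" and dr: "dim \<rho> = CARD('n)" using r by (auto simp: top_cones_def)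
  have cvx: "convex \<rho>" and z0: "0 \<in> \<rho>" using fan_cone[OF F1 rS] by auto
  have "aff_dim \<rho> = int CARD('n)" using aff_dim_cone[OF z0] dr by simp
  then have "affine hull \<rho> = UNIV" using aff_dim_eq_full[of \<rho>] by simp
  then have "rel_interior \<rho> = interior \<rho>" by (rule rel_interior_interior)
  moreover have "rel_interior \<rho> \<noteq> {}" using rel_interior_eq_empty[OF cvx] z0 by auto
  ultimately have "interior \<rho> \<noteq> {}" by simp
  then have "closure (interior \<rho>) = closure \<rho>" by (rule convex_closure_interior[OF cvx])
  then have "\<rho> \<subseteq> G" using cG closure_subset[of \<rho>] by simp
  then have "x \<in> G" using x by (rule subsetD)
  then show ?thesis unfolding G_def by simp
qed

end

lemma global_convex:
  fixes \<Sigma> :: "(real^'n) set set"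
  assumes F1: "fan \<Sigma>" and F2: "nonsingular \<Sigma>" and fin: "finite \<Sigma>" and CC: "complete_fan \<Sigma>"
    and pc: "pairwise_convex \<Sigma>"
  shows "convex (fan_polytope \<Sigma>)"
proof -
  define H where "H = (\<Inter>\<sigma>\<in>top_cones \<Sigma>. {x. ell (basis_of \<sigma>) x \<le> 1})"
  have cH: "convex H" unfolding H_def
  proof (rule convex_INT)
    fix \<sigma> assume s: "\<sigma> \<in> top_cones \<Sigma>"
    have "bas (basis_of \<sigma>)" using basis_of[OF F1 F2 s] Zbasis_bas by auto
    then show "convex {x. ell (basis_of \<sigma>) x \<le> 1}" by (rule convex_le1[OF ell_linear])
  qed
  have "fan_polytope \<Sigma> = H"
  proof (rule set_eqI, rule iffI)
    fix x assume "x \<in> fan_polytope \<Sigma>"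
    then obtain \<rho> where r: "\<rho> \<in> top_cones \<Sigma>" and xu: "x \<in> unit_part \<rho>" by (auto simp: fan_polytope_def)
    have xr: "x \<in> \<rho>" and l1: "ell (basis_of \<rho>) x \<le> 1" using unit_part_char[OF F1 F2 r] xu by auto
    show "x \<in> H" unfolding H_def
    proof (rule InterI, clarify)
      fix \<sigma> assume s: "\<sigma> \<in> top_cones \<Sigma>"
      have "ell (basis_of \<sigma>) x \<le> ell (basis_of \<rho>) x" by (rule key[OF F1 F2 fin CC pc s r xr])
      then show "ell (basis_of \<sigma>) x \<le> 1" using l1 by simp
    qed
  next
    fix x assume xH: "x \<in> H"
    obtain \<rho> where r: "\<rho> \<in> top_cones \<Sigma>" and xr: "x \<in> \<rho>" using cover[OF F1 F2 fin CC] by blast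
    have "ell (basis_of \<rho>) x \<le> 1" using xH r unfolding H_def by blast
    then have "x \<in> unit_part \<rho>" using unit_part_char[OF F1 F2 r] xr by simp
    then show "x \<in> fan_polytope \<Sigma>" using r by (auto simp: fan_polytope_def)
  qed
  then show ?thesis using cH by simp
qed

theorem proposition5p7:
  fixes \<Sigma> :: "(real^'n) set set"
  assumes "fan \<Sigma>" and "nonsingular \<Sigma>"
  shows "(pairwise_convex \<Sigma> \<longleftrightarrow>
            (\<forall>\<sigma> \<tau>. adjacent \<Sigma> \<sigma> \<tau> \<longrightarrow> convex (unit_part \<sigma> \<union> unit_part \<tau>)))
       \<and> (finite \<Sigma> \<and> complete_fan \<Sigma> \<longrightarrow>
            (pairwise_convex \<Sigma> \<longleftrightarrow> pairwise_positive \<Sigma> \<and> convex (fan_polytope \<Sigma>)))"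
proof
  show "pairwise_convex \<Sigma> \<longleftrightarrow>
            (\<forall>\<sigma> \<tau>. adjacent \<Sigma> \<sigma> \<tau> \<longrightarrow> convex (unit_part \<sigma> \<union> unit_part \<tau>))"
    by (rule part1[OF assms])
  show "finite \<Sigma> \<and> complete_fan \<Sigma> \<longrightarrow>
            (pairwise_convex \<Sigma> \<longleftrightarrow> pairwise_positive \<Sigma> \<and> convex (fan_polytope \<Sigma>))"
  proof (intro impI iffI)
    assume fc: "finite \<Sigma> \<and> complete_fan \<Sigma>" and pc: "pairwise_convex \<Sigma>"
    show "pairwise_positive \<Sigma> \<and> convex (fan_polytope \<Sigma>)"
      using pc_pos[OF assms pc] global_convex[OF assms _ _ pc] fc by simp
  next
    assume "pairwise_positive \<Sigma> \<and> convex (fan_polytope \<Sigma>)"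
    then show "pairwise_convex \<Sigma>" using part2_back[OF assms] by simp
  qed
qed

end
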